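(* The SRT$_{\mathsf{AD}}$-definable transformations are closed under union, intersection and composition, and the SRT$_{\mathsf{AU}}$-definable transformations are closed under union, intersection and composition. (Here, for a class $\mathcal{C}$ of transducers, closure means: for $\mathcal{C}$-transducers $\mathcal{S}_1,\mathcal{S}_2$ over a common linear group and compatible label sets, the union, intersection (same signature) and composition $[\![\mathcal{S}_1]\!]\cdot[\![\mathcal{S}_2]\!]$ are each equal to $[\![\mathcal{S}]\!]$ for some $\mathcal{C}$-transducer $\mathcal{S}$.)
   Context: A linear group is a triple $\mathbf{G}=(D,\leq,+)$ where $D$ is an infinite set, $\leq$ is a total order on $D$, and $(D,+)$ is a group with identity $0$. For finite label sets $\Sigma,\Gamma$, a $(\Sigma,\Gamma,\mathbf{G})$-streaming register transducer (SRT) is a tuple $\mathcal{S}=(Q,q_0,k,R_0,\Delta)$: $Q$ finite set of states, $q_0\in Q$, $k\in\mathbb{N}$ registers, initial values $R_0\in D^k$, and transitions $\Delta\subseteq Q\times\Sigma\times\{>,=,<\}^k\times\{\mathsf{old},\mathsf{new},\mathsf{add}\}^k\times\{1,\dots,k\}\times\Gamma\times Q$. A transition $(q,\sigma,l,m,u,\gamma,q')$ enables the step $(q,R)\xrightarrow[(\gamma,d')]{(\sigma,d)}(q',R')$ iff (1) for every $i$, $d>R[i]$, $d=R[i]$ or $d<R[i]$ according as $l[i]$ is $>$, $=$, $<$; (2) $R'[i]=R[i]$, $d$, or $R[i]+d$ according as $m[i]$ is $\mathsf{old}$, $\mathsf{new}$, $\mathsf{add}$; (3) $d'=R'[u]$.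 A run over $s\in(\Sigma\times D)^*$ of length $n$ generating $t\in(\Gamma\times D)^*$ is a sequence of $n$ enabled steps from $(q_0,R_0)$ reading $s[i]$ and emitting $t[i]$. $s\otimes t$ is the word with $i$-th letter $(s[i],t[i])$; $[\![\mathcal{S}]\!]=\{s\otimes t:\text{there is a run over }s\text{ generating }t\}$. SRT$_{\mathsf{A}}$ (add-free): all update vectors lie in $\{\mathsf{old},\mathsf{new}\}^k$. SRT$_{\mathsf{AD}}$: add-free and the order $\leq$ of $\mathbf{G}$ is dense (for $a<b$ there is $c$ with $a<c<b$). SRT$_{\mathsf{AU}}$: add-free and $R_0=(0,\dots,0)$. Composition: for $\mathcal{T}_1$ over $(\Sigma\times D)\times(\Gamma\times D)$ and $\mathcal{T}_2$ over $(\Gamma\times D)\times(\Theta\times D)$, $\mathcal{T}_1\cdot\mathcal{T}_2$ is the set of $s_1\otimes s_2$ ($s_1\in(\Sigma\times D)^*$, $s_2\in(\Theta\times D)^*$) such that some $s_3\in(\Gamma\times D)^*$ has $s_1\otimes s_3\in\mathcal{T}_1$ and $s_3\otimes s_2\in\mathcal{T}_2$. *)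

theory Defs
  imports Main
begin

text \<open>Linear groups: a type 'd of class linorder and group_add (no compatibility
  between order and group is assumed), with infinite carrier (stated in the theorem).
  Registers are indexed 0..k-1 (the paper's 1..k).\<close>

datatype cmp = CGt | CEq | CLt
datatype upd = UOld | UNew | UAdd

type_synonym ('a,'b) srt_trans = "nat \<times> 'a \<times> cmp list \<times> upd list \<times> nat \<times> 'b \<times> nat"

record ('a,'b,'d) srt =
  states :: "nat set"
  init :: nat
  nregs :: nat
  rinit :: "'d list"
  trans :: "('a,'b) srt_trans set"

definition wf_srt :: "('a,'b,'d) srt \<Rightarrow> bool" where
  "wf_srt S \<longleftrightarrow> finite (states S) \<and> init S \<in> states S \<and> length (rinit S) = nregs S \<and>
     (\<forall>(q,\<sigma>,l,m,u,\<gamma>,q') \<in> trans S. q \<in> states S \<and> q' \<in> states S \<and>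
        length l = nregs S \<and> length m = nregs S \<and> u < nregs S)"

fun cmp_holds :: "cmp \<Rightarrow> 'd::linorder \<Rightarrow> 'd \<Rightarrow> bool" where
  "cmp_holds CGt d r = (d > r)"
| "cmp_holds CEq d r = (d = r)"
| "cmp_holds CLt d r = (d < r)"

fun upd_val :: "upd \<Rightarrow> 'd::plus \<Rightarrow> 'd \<Rightarrow> 'd" where
  "upd_val UOld r d = r"
| "upd_val UNew r d = d"
| "upd_val UAdd r d = r + d"

definition srt_step :: "('a,'b,'d::{linorder,group_add}) srt \<Rightarrow> nat \<times> 'd list \<Rightarrow> 'a \<times> 'd
     \<Rightarrow> 'b \<times> 'd \<Rightarrow> nat \<times> 'd list \<Rightarrow> bool" where
  "srt_step S c x y c' \<longleftrightarrow>
     (\<exists>l m u. (fst c, fst x, l, m, u, fst y, fst c') \<in> trans S \<and>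
        (\<forall>i < nregs S. cmp_holds (l ! i) (snd x) (snd c ! i)) \<and>
        snd c' = map (\<lambda>i. upd_val (m ! i) (snd c ! i) (snd x)) [0..<nregs S] \<and>
        snd y = snd c' ! u)"

fun srt_run :: "('a,'b,'d::{linorder,group_add}) srt \<Rightarrow> nat \<times> 'd list
     \<Rightarrow> ('a \<times> 'd) list \<Rightarrow> ('b \<times> 'd) list \<Rightarrow> bool" where
  "srt_run S c [] [] = True"
| "srt_run S c (x # xs) (y # ys) = (\<exists>c'. srt_step S c x y c' \<and> srt_run S c' xs ys)"
| "srt_run S c _ _ = False"

text \<open>The transformation [[S]] = set of s \<otimes> t (words of pairs).\<close>
definition srt_sem :: "('a,'b,'d::{linorder,group_add}) srt
     \<Rightarrow> (('a \<times> 'd) \<times> ('b \<times> 'd)) list set" where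
  "srt_sem S = {zip s t | s t. length s = length t \<and> srt_run S (init S, rinit S) s t}"

definition add_free :: "('a,'b,'d) srt \<Rightarrow> bool" where
  "add_free S \<longleftrightarrow> (\<forall>(q,\<sigma>,l,m,u,\<gamma>,q') \<in> trans S. set m \<subseteq> {UOld, UNew})"

definition srt_AU :: "('a,'b,'d::zero) srt \<Rightarrow> bool" where
  "srt_AU S \<longleftrightarrow> wf_srt S \<and> add_free S \<and> rinit S = replicate (nregs S) 0"

text \<open>SRT_AD: add-free SRT (density of the order is a hypothesis on 'd in the theorem).\<close>
definition srt_AD :: "('a,'b,'d) srt \<Rightarrow> bool" where
  "srt_AD S \<longleftrightarrow> wf_srt S \<and> add_free S"

definition rel_comp ::
  "(('a \<times> 'd) \<times> ('b \<times> 'd)) list set \<Rightarrow> (('b \<times> 'd) \<times> ('c \<times> 'd)) list set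
     \<Rightarrow> (('a \<times> 'd) \<times> ('c \<times> 'd)) list set" where
  "rel_comp T1 T2 = {zip s1 s2 | s1 s2. length s1 = length s2 \<and>
     (\<exists>s3. length s3 = length s1 \<and> zip s1 s3 \<in> T1 \<and> zip s3 s2 \<in> T2)}"

end

theory Submission
  imports Defs "HOL-Library.Countable"
begin

instance cmp :: countable by countable_datatype

definition cmp_of :: "'d::linorder \<Rightarrow> 'd \<Rightarrow> cmp" where
  "cmp_of x y = (if x > y then CGt else if x = y then CEq else CLt)"

lemma cmp_holds_iff: "cmp_holds c x y \<longleftrightarrow> c = cmp_of x y"
  by (cases c) (auto simp: cmp_of_def)

lemma cmp_of_refl[simp]: "cmp_of x x = CEq"
  by (simp add: cmp_of_def)

lemma cmp_of_eq_iff: "cmp_of x y = CEq \<longleftrightarrow> x = y"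
  by (auto simp: cmp_of_def)

lemma cmp_holds_of: "cmp_holds (cmp_of x y) x y"
  by (simp add: cmp_holds_iff)

fun flipc :: "cmp \<Rightarrow> cmp" where
  "flipc CGt = CLt" | "flipc CEq = CEq" | "flipc CLt = CGt"

lemma flip_cmp_of: "flipc (cmp_of x y) = cmp_of y x"
  by (auto simp: cmp_of_def)

lemma cmp_UNIV: "(UNIV :: cmp set) = {CGt, CEq, CLt}"
  using cmp.exhaust by auto

lemma finite_cmp: "finite (UNIV :: cmp set)"
  by (simp add: cmp_UNIV)

lemma run_len: "srt_run S c xs ys \<Longrightarrow> length xs = length ys"
  by (induction S c xs ys rule: srt_run.induct) auto

lemma sem_iff: "z \<in> srt_sem S \<longleftrightarrow> srt_run S (init S, rinit S) (map fst z) (map snd z)"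
  unfolding srt_sem_def
proof safe
  fix s t assume "length s = length t" "srt_run S (init S, rinit S) s t"
  then show "srt_run S (init S, rinit S) (map fst (zip s t)) (map snd (zip s t))" by simp
next
  assume "srt_run S (init S, rinit S) (map fst z) (map snd z)"
  then show "\<exists>s t. z = zip s t \<and> length s = length t \<and> srt_run S (init S, rinit S) s t"
    by (intro exI[of _ "map fst z"] exI[of _ "map snd z"]) (simp add: zip_map_fst_snd)
qed

lemma rel_comp_iff: "z \<in> rel_comp A B \<longleftrightarrow>
   (\<exists>s3. length s3 = length z \<and> zip (map fst z) s3 \<in> A \<and> zip s3 (map snd z) \<in> B)"
  unfolding rel_comp_def
proof safe
  fix s1 s2 s3 assume "length s1 = length s2" "length s3 = length s1" "zip s1 s3 \<in> A" "zip s3 s2 \<in> B"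
  then show "\<exists>s3'. length s3' = length (zip s1 s2) \<and> zip (map fst (zip s1 s2)) s3' \<in> A \<and> zip s3' (map snd (zip s1 s2)) \<in> B"
    by (intro exI[of _ s3]) simp
next
  fix s3 assume "length s3 = length z" "zip (map fst z) s3 \<in> A" "zip s3 (map snd z) \<in> B"
  then show "\<exists>s1 s2. z = zip s1 s2 \<and> length s1 = length s2 \<and> (\<exists>s3. length s3 = length s1 \<and> zip s1 s3 \<in> A \<and> zip s3 s2 \<in> B)"
    by (intro exI[of _ "map fst z"] exI[of _ "map snd z"]) (auto simp: zip_map_fst_snd)
qed

lemma sem_zip: "length s = length t \<Longrightarrow> zip s t \<in> srt_sem S \<longleftrightarrow> srt_run S (init S, rinit S) s t"
  by (simp add: sem_iff)

lemma rel_comp_sem: "z \<in> rel_comp (srt_sem S1) (srt_sem S2) \<longleftrightarrow>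
   (\<exists>ys. srt_run S1 (init S1, rinit S1) (map fst z) ys \<and> srt_run S2 (init S2, rinit S2) ys (map snd z))"
  unfolding rel_comp_iff
  by (metis length_map run_len sem_zip)

lemma inter_sem: "z \<in> srt_sem S1 \<inter> srt_sem S2 \<longleftrightarrow>
   srt_run S1 (init S1, rinit S1) (map fst z) (map snd z) \<and> srt_run S2 (init S2, rinit S2) (map fst z) (map snd z)"
  by (simp add: sem_iff)

definition gstep :: "('s \<times> 'a \<times> cmp list \<times> upd list \<times> nat \<times> 'b \<times> 's) set \<Rightarrow> nat \<Rightarrow>
   's \<times> 'd::{linorder,group_add} list \<Rightarrow> 'a \<times> 'd \<Rightarrow> 'b \<times> 'd \<Rightarrow> 's \<times> 'd list \<Rightarrow> bool" where
  "gstep T k c x y c' \<longleftrightarrow>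
     (\<exists>l m u. (fst c, fst x, l, m, u, fst y, fst c') \<in> T \<and>
        (\<forall>i < k. cmp_holds (l ! i) (snd x) (snd c ! i)) \<and>
        snd c' = map (\<lambda>i. upd_val (m ! i) (snd c ! i) (snd x)) [0..<k] \<and>
        snd y = snd c' ! u)"

fun grun :: "('s \<times> 'a \<times> cmp list \<times> upd list \<times> nat \<times> 'b \<times> 's) set \<Rightarrow> nat \<Rightarrow>
   's \<times> 'd::{linorder,group_add} list \<Rightarrow> ('a \<times> 'd) list \<Rightarrow> ('b \<times> 'd) list \<Rightarrow> bool" where
  "grun T k c [] [] = True"
| "grun T k c (x # xs) (y # ys) = (\<exists>c'. gstep T k c x y c' \<and> grun T k c' xs ys)"
| "grun T k c _ _ = False"

definition enc_t :: "'s::countable \<times> 'a \<times> cmp list \<times> upd list \<times> nat \<times> 'b \<times> 's \<Rightarrow> (nat \<times> 'a \<times> cmp list \<times> upd list \<times> nat \<times> 'b \<times> nat)" where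
  "enc_t t = (case t of (q,\<sigma>,l,m,u,\<gamma>,q') \<Rightarrow> (to_nat q,\<sigma>,l,m,u,\<gamma>,to_nat q'))"

definition mk :: "'s::countable set \<Rightarrow> 's \<Rightarrow> nat \<Rightarrow> 'd list \<Rightarrow> ('s \<times> 'a \<times> cmp list \<times> upd list \<times> nat \<times> 'b \<times> 's) set \<Rightarrow> ('a,'b,'d) srt" where
  "mk Q q0 k R0 T = \<lparr>states = to_nat ` Q, init = to_nat q0, nregs = k, rinit = R0, trans = enc_t ` T\<rparr>"

lemma enc_t_mem: "(to_nat q, \<sigma>, l, m, u, \<gamma>, n') \<in> enc_t ` T \<longleftrightarrow> (\<exists>q'. n' = to_nat q' \<and> (q,\<sigma>,l,m,u,\<gamma>,q') \<in> T)"
  by (force simp: enc_t_def)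

lemma mk_step: "srt_step (mk Q q0 k R0 T) (to_nat q, R) x y c' \<longleftrightarrow> (\<exists>q'. fst c' = to_nat q' \<and> gstep T k (q,R) x y (q', snd c'))"
  unfolding srt_step_def gstep_def by (auto simp: mk_def enc_t_mem)

lemma mk_run: "srt_run (mk Q q0 k R0 T) (to_nat q, R) xs ys \<longleftrightarrow> grun T k (q,R) xs ys"
proof (induction xs arbitrary: q R ys)
  case Nil then show ?case by (cases ys) auto
next
  case (Cons x xs)
  show ?case
  proof (cases ys)
    case Nil then show ?thesis by simp
  next
    case (Cons y ys')
    have "srt_run (mk Q q0 k R0 T) (to_nat q, R) (x#xs) (y#ys') \<longleftrightarrow>
          (\<exists>c'. srt_step (mk Q q0 k R0 T) (to_nat q, R) x y c' \<and> srt_run (mk Q q0 k R0 T) c' xs ys')" by simp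
    also have "\<dots> \<longleftrightarrow> (\<exists>q' R'. gstep T k (q,R) x y (q', R') \<and> grun T k (q',R') xs ys')"
      unfolding mk_step using Cons.IH by (metis prod.collapse fst_conv snd_conv)
    also have "\<dots> \<longleftrightarrow> grun T k (q,R) (x#xs) (y#ys')" by auto
    finally show ?thesis using Cons by simp
  qed
qed

lemma mk_sem: "srt_sem (mk Q q0 k R0 T) = {z. grun T k (q0,R0) (map fst z) (map snd z)}"
  using mk_run[of Q q0 k R0 T q0 R0] by (auto simp: sem_iff mk_def)

lemma mk_wf:
  assumes "finite Q" "q0 \<in> Q" "length R0 = k"
    "\<And>q \<sigma> l m u \<gamma> q'. (q,\<sigma>,l,m,u,\<gamma>,q') \<in> T \<Longrightarrow> q \<in> Q \<and> q' \<in> Q \<and> length l = k \<and> length m = k \<and> u < k"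
  shows "wf_srt (mk Q q0 k R0 T)"
  using assms unfolding wf_srt_def mk_def by (force simp: enc_t_def)

lemma mk_af:
  assumes "\<And>q \<sigma> l m u \<gamma> q'. (q,\<sigma>,l,m,u,\<gamma>,q') \<in> T \<Longrightarrow> set m \<subseteq> {UOld, UNew}"
  shows "add_free (mk Q q0 k R0 T)"
  using assms unfolding add_free_def mk_def by (force simp: enc_t_def)

lemma mk_simps[simp]: "nregs (mk Q q0 k R0 T) = k" "rinit (mk Q q0 k R0 T) = R0"
  by (simp_all add: mk_def)


lemma guard_app:
  assumes "length l1 = length R1" "length l2 = length R2"
  shows "(\<forall>i<length R1 + length R2. cmp_holds ((l1@l2)!i) d ((R1@R2)!i)) \<longleftrightarrow>
         (\<forall>i<length R1. cmp_holds (l1!i) d (R1!i)) \<and> (\<forall>j<length R2. cmp_holds (l2!j) d (R2!j))"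
proof (intro iffI conjI allI impI)
  fix j assume H: "\<forall>i<length R1 + length R2. cmp_holds ((l1@l2)!i) d ((R1@R2)!i)" and j: "j < length R2"
  have "length R1 + j < length R1 + length R2" using j by simp
  then have "cmp_holds ((l1@l2)!(length R1 + j)) d ((R1@R2)!(length R1 + j))" using H by blast
  then show "cmp_holds (l2!j) d (R2!j)" using assms by (simp add: nth_append)
next
  fix i assume H: "\<forall>i<length R1 + length R2. cmp_holds ((l1@l2)!i) d ((R1@R2)!i)" and i: "i < length R1"
  have "cmp_holds ((l1@l2)!i) d ((R1@R2)!i)" using H i by simp
  then show "cmp_holds (l1!i) d (R1!i)" using assms i by (simp add: nth_append)
next
  fix i assume H: "(\<forall>i<length R1. cmp_holds (l1!i) d (R1!i)) \<and> (\<forall>j<length R2. cmp_holds (l2!j) d (R2!j))"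
    and i: "i < length R1 + length R2"
  show "cmp_holds ((l1@l2)!i) d ((R1@R2)!i)"
  proof (cases "i < length R1")
    case True then show ?thesis using H assms by (simp add: nth_append)
  next
    case False
    then have "i - length R1 < length R2" using i by simp
    then show ?thesis using H assms False by (simp add: nth_append)
  qed
qed

lemma upd_app1:
  assumes "length m1 = length R1"
  shows "map (\<lambda>i. upd_val ((m1 @ replicate (length R2) UOld)!i) ((R1@R2)!i) d) [0..<length R1 + length R2]
         = map (\<lambda>i. upd_val (m1!i) (R1!i) d) [0..<length R1] @ R2"
proof (rule nth_equalityI)
  fix i assume "i < length (map (\<lambda>i. upd_val ((m1 @ replicate (length R2) UOld)!i) ((R1@R2)!i) d) [0..<length R1 + length R2])"
  then have i: "i < length R1 + length R2" by simp
  show "map (\<lambda>i. upd_val ((m1 @ replicate (length R2) UOld)!i) ((R1@R2)!i) d) [0..<length R1 + length R2] ! i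
         = (map (\<lambda>i. upd_val (m1!i) (R1!i) d) [0..<length R1] @ R2) ! i"
    using i assms by (cases "i < length R1") (simp_all add: nth_append)
qed simp

lemma upd_app2:
  assumes "length m2 = length R2"
  shows "map (\<lambda>i. upd_val ((replicate (length R1) UOld @ m2)!i) ((R1@R2)!i) d) [0..<length R1 + length R2]
         = R1 @ map (\<lambda>i. upd_val (m2!i) (R2!i) d) [0..<length R2]"
proof (rule nth_equalityI)
  fix i assume "i < length (map (\<lambda>i. upd_val ((replicate (length R1) UOld @ m2)!i) ((R1@R2)!i) d) [0..<length R1 + length R2])"
  then have i: "i < length R1 + length R2" by simp
  show "map (\<lambda>i. upd_val ((replicate (length R1) UOld @ m2)!i) ((R1@R2)!i) d) [0..<length R1 + length R2] ! i
         = (R1 @ map (\<lambda>i. upd_val (m2!i) (R2!i) d) [0..<length R2]) ! i"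
  proof (cases "i < length R1")
    case True then show ?thesis using i assms by (simp add: nth_append)
  next
    case False
    then have "i - length R1 < length R2" using i by simp
    then show ?thesis using i assms False by (simp add: nth_append)
  qed
qed simp

definition uP1 :: "('a,'b,'d) srt \<Rightarrow> ('a,'b,'d) srt \<Rightarrow> nat \<Rightarrow> 'a \<Rightarrow> cmp list \<Rightarrow> upd list \<Rightarrow> nat \<Rightarrow> 'b \<Rightarrow> (nat + nat) option \<Rightarrow> bool" where
  "uP1 S1 S2 q \<sigma> l m u \<gamma> s' \<longleftrightarrow> (\<exists>l1 l2 m1 q1'. (q,\<sigma>,l1,m1,u,\<gamma>,q1') \<in> trans S1 \<and> length l2 = nregs S2 \<and> l = l1@l2 \<and>
     m = m1 @ replicate (nregs S2) UOld \<and> s' = Some (Inl q1'))"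

definition uP2 :: "('a,'b,'d) srt \<Rightarrow> ('a,'b,'d) srt \<Rightarrow> nat \<Rightarrow> 'a \<Rightarrow> cmp list \<Rightarrow> upd list \<Rightarrow> nat \<Rightarrow> 'b \<Rightarrow> (nat + nat) option \<Rightarrow> bool" where
  "uP2 S1 S2 q \<sigma> l m u \<gamma> s' \<longleftrightarrow> (\<exists>l1 l2 m2 u2 q2'. (q,\<sigma>,l2,m2,u2,\<gamma>,q2') \<in> trans S2 \<and> length l1 = nregs S1 \<and> l = l1@l2 \<and>
     m = replicate (nregs S1) UOld @ m2 \<and> u = nregs S1 + u2 \<and> s' = Some (Inr q2'))"

definition unionT :: "('a,'b,'d) srt \<Rightarrow> ('a,'b,'d) srt \<Rightarrow> ((nat + nat) option \<times> 'a \<times> cmp list \<times> upd list \<times> nat \<times> 'b \<times> (nat + nat) option) set" where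
  "unionT S1 S2 = {(s,\<sigma>,l,m,u,\<gamma>,s'). (case s of None \<Rightarrow> uP1 S1 S2 (init S1) \<sigma> l m u \<gamma> s' \<or> uP2 S1 S2 (init S2) \<sigma> l m u \<gamma> s'
      | Some (Inl q) \<Rightarrow> uP1 S1 S2 q \<sigma> l m u \<gamma> s' | Some (Inr q) \<Rightarrow> uP2 S1 S2 q \<sigma> l m u \<gamma> s')}"

lemma unionT_Inl: "(Some (Inl q), \<sigma>, l, m, u, \<gamma>, s') \<in> unionT S1 S2 \<longleftrightarrow>
  (\<exists>l1 l2 m1 q1'. (q,\<sigma>,l1,m1,u,\<gamma>,q1') \<in> trans S1 \<and> length l2 = nregs S2 \<and> l = l1@l2 \<and>
     m = m1 @ replicate (nregs S2) UOld \<and> s' = Some (Inl q1'))"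
  by (simp add: unionT_def uP1_def)

lemma unionT_Inr: "(Some (Inr q), \<sigma>, l, m, u, \<gamma>, s') \<in> unionT S1 S2 \<longleftrightarrow>
  (\<exists>l1 l2 m2 u2 q2'. (q,\<sigma>,l2,m2,u2,\<gamma>,q2') \<in> trans S2 \<and> length l1 = nregs S1 \<and> l = l1@l2 \<and>
     m = replicate (nregs S1) UOld @ m2 \<and> u = nregs S1 + u2 \<and> s' = Some (Inr q2'))"
  by (simp add: unionT_def uP2_def)

lemma unionT_None: "(None, \<sigma>, l, m, u, \<gamma>, s') \<in> unionT S1 S2 \<longleftrightarrow>
   (Some (Inl (init S1)), \<sigma>, l, m, u, \<gamma>, s') \<in> unionT S1 S2 \<or> (Some (Inr (init S2)), \<sigma>, l, m, u, \<gamma>, s') \<in> unionT S1 S2"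
  by (simp add: unionT_def)

lemma unionT_cases: "(s, \<sigma>, l, m, u, \<gamma>, s') \<in> unionT S1 S2 \<Longrightarrow>
  (\<exists>q. (s = None \<and> q = init S1 \<or> s = Some (Inl q)) \<and> uP1 S1 S2 q \<sigma> l m u \<gamma> s') \<or>
  (\<exists>q. (s = None \<and> q = init S2 \<or> s = Some (Inr q)) \<and> uP2 S1 S2 q \<sigma> l m u \<gamma> s')"
  by (auto simp: unionT_def split: option.splits sum.splits)

lemma uT1: "(q1,\<sigma>,l1,m1,u1,\<gamma>,q1') \<in> trans S1 \<Longrightarrow> length l2 = nregs S2 \<Longrightarrow>
    (Some (Inl q1), \<sigma>, l1@l2, m1 @ replicate (nregs S2) UOld, u1, \<gamma>, Some (Inl q1')) \<in> unionT S1 S2"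
  unfolding unionT_Inl by blast

lemma uT2: "(q2,\<sigma>,l2,m2,u2,\<gamma>,q2') \<in> trans S2 \<Longrightarrow> length l1 = nregs S1 \<Longrightarrow>
    (Some (Inr q2), \<sigma>, l1@l2, replicate (nregs S1) UOld @ m2, nregs S1 + u2, \<gamma>, Some (Inr q2')) \<in> unionT S1 S2"
  unfolding unionT_Inr by blast

definition unionM :: "('a,'b,'d) srt \<Rightarrow> ('a,'b,'d) srt \<Rightarrow> ('a,'b,'d) srt" where
  "unionM S1 S2 = mk (insert None (Some ` (Inl ` states S1 \<union> Inr ` states S2))) None
     (nregs S1 + nregs S2) (rinit S1 @ rinit S2) (unionT S1 S2)"

lemma af_D: assumes "add_free S" "(q,\<sigma>,l,m,u,\<gamma>,q') \<in> trans S" shows "set m \<subseteq> {UOld,UNew}"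
  using bspec[OF assms(1)[unfolded add_free_def] assms(2)] by simp

context
  fixes S1 S2 :: "('a,'b,'d::{linorder,group_add}) srt"
  assumes wf1: "wf_srt S1" and wf2: "wf_srt S2"
begin

lemma t1_len: "(q,\<sigma>,l,m,u,\<gamma>,q') \<in> trans S1 \<Longrightarrow> length l = nregs S1 \<and> length m = nregs S1 \<and> u < nregs S1 \<and> q \<in> states S1 \<and> q' \<in> states S1"
  using wf1 unfolding wf_srt_def by fast
lemma t2_len: "(q,\<sigma>,l,m,u,\<gamma>,q') \<in> trans S2 \<Longrightarrow> length l = nregs S2 \<and> length m = nregs S2 \<and> u < nregs S2 \<and> q \<in> states S2 \<and> q' \<in> states S2"
  using wf2 unfolding wf_srt_def by fast

lemma ustep1:
  assumes "length R1 = nregs S1" "length R2 = nregs S2"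
  shows "gstep (unionT S1 S2) (nregs S1 + nregs S2) (Some (Inl q), R1@R2) x y c' \<longleftrightarrow>
    (\<exists>c1'. srt_step S1 (q,R1) x y c1' \<and> c' = (Some (Inl (fst c1')), snd c1' @ R2))"
proof
  assume "gstep (unionT S1 S2) (nregs S1 + nregs S2) (Some (Inl q), R1@R2) x y c'"
  then obtain l m u where T: "(Some (Inl q), fst x, l, m, u, fst y, fst c') \<in> unionT S1 S2"
    and G: "\<forall>i < nregs S1 + nregs S2. cmp_holds (l ! i) (snd x) ((R1@R2) ! i)"
    and U: "snd c' = map (\<lambda>i. upd_val (m ! i) ((R1@R2) ! i) (snd x)) [0..<nregs S1 + nregs S2]"
    and O: "snd y = snd c' ! u"
    unfolding gstep_def by auto
  from T obtain l1 l2 m1 q1' where tr: "(q,fst x,l1,m1,u,fst y,q1') \<in> trans S1" "length l2 = nregs S2"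
    "l = l1@l2" "m = m1 @ replicate (nregs S2) UOld" "fst c' = Some (Inl q1')"
    unfolding unionT_Inl by blast
  have len: "length l1 = nregs S1" "length m1 = nregs S1" "u < nregs S1" using t1_len[OF tr(1)] by auto
  have G1: "\<forall>i<nregs S1. cmp_holds (l1!i) (snd x) (R1!i)"
    using G guard_app[of l1 R1 l2 R2 "snd x"] len assms tr by auto
  define R1' where "R1' = map (\<lambda>i. upd_val (m1 ! i) (R1 ! i) (snd x)) [0..<nregs S1]"
  have U': "snd c' = R1' @ R2" using U upd_app1[of m1 R1 R2 "snd x"] len assms tr unfolding R1'_def by simp
  have "srt_step S1 (q,R1) x y (q1', R1')"
    unfolding srt_step_def using tr G1 O U' len
    by (intro exI[of _ l1] exI[of _ m1] exI[of _ u]) (auto simp: R1'_def nth_append)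
  then show "\<exists>c1'. srt_step S1 (q,R1) x y c1' \<and> c' = (Some (Inl (fst c1')), snd c1' @ R2)"
    using tr U' by (intro exI[of _ "(q1', R1')"]) (simp add: prod_eq_iff)
next
  assume "\<exists>c1'. srt_step S1 (q,R1) x y c1' \<and> c' = (Some (Inl (fst c1')), snd c1' @ R2)"
  then obtain c1' where st: "srt_step S1 (q,R1) x y c1'" and c': "c' = (Some (Inl (fst c1')), snd c1' @ R2)" by blast
  from st obtain l1 m1 u where tr: "(q, fst x, l1, m1, u, fst y, fst c1') \<in> trans S1"
    and G1: "\<forall>i<nregs S1. cmp_holds (l1!i) (snd x) (R1!i)"
    and U: "snd c1' = map (\<lambda>i. upd_val (m1 ! i) (R1 ! i) (snd x)) [0..<nregs S1]"
    and O: "snd y = snd c1' ! u"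
    unfolding srt_step_def by auto
  have len: "length l1 = nregs S1" "length m1 = nregs S1" "u < nregs S1" using t1_len[OF tr] by auto
  define l2 where "l2 = map (\<lambda>j. cmp_of (snd x) (R2!j)) [0..<nregs S2]"
  have T: "(Some (Inl q), fst x, l1@l2, m1 @ replicate (nregs S2) UOld, u, fst y, fst c') \<in> unionT S1 S2"
    using uT1[OF tr, of l2] c' by (auto simp: l2_def)
  have G: "\<forall>i < nregs S1 + nregs S2. cmp_holds ((l1@l2) ! i) (snd x) ((R1@R2) ! i)"
    using guard_app[of l1 R1 l2 R2 "snd x"] len assms G1 by (auto simp: l2_def cmp_holds_of)
  have U': "snd c' = map (\<lambda>i. upd_val ((m1 @ replicate (nregs S2) UOld) ! i) ((R1@R2) ! i) (snd x)) [0..<nregs S1 + nregs S2]"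
    using upd_app1[of m1 R1 R2 "snd x"] len assms c' U by simp
  show "gstep (unionT S1 S2) (nregs S1 + nregs S2) (Some (Inl q), R1@R2) x y c'"
    unfolding gstep_def
  proof (intro exI conjI)
    show "(fst (Some (Inl q), R1@R2), fst x, l1@l2, m1 @ replicate (nregs S2) UOld, u, fst y, fst c') \<in> unionT S1 S2"
      using T by simp
    show "\<forall>i < nregs S1 + nregs S2. cmp_holds ((l1@l2) ! i) (snd x) (snd (Some (Inl q), R1@R2) ! i)"
      using G by simp
    show "snd c' = map (\<lambda>i. upd_val ((m1 @ replicate (nregs S2) UOld) ! i) (snd (Some (Inl q), R1@R2) ! i) (snd x)) [0..<nregs S1 + nregs S2]"
      using U' by simp
    show "snd y = snd c' ! u" using O U c' len assms by (simp add: nth_append)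
  qed
qed

lemma ustep2:
  assumes "length R1 = nregs S1" "length R2 = nregs S2"
  shows "gstep (unionT S1 S2) (nregs S1 + nregs S2) (Some (Inr q), R1@R2) x y c' \<longleftrightarrow>
    (\<exists>c2'. srt_step S2 (q,R2) x y c2' \<and> c' = (Some (Inr (fst c2')), R1 @ snd c2'))"
proof
  assume "gstep (unionT S1 S2) (nregs S1 + nregs S2) (Some (Inr q), R1@R2) x y c'"
  then obtain l m u where T: "(Some (Inr q), fst x, l, m, u, fst y, fst c') \<in> unionT S1 S2"
    and G: "\<forall>i < nregs S1 + nregs S2. cmp_holds (l ! i) (snd x) ((R1@R2) ! i)"
    and U: "snd c' = map (\<lambda>i. upd_val (m ! i) ((R1@R2) ! i) (snd x)) [0..<nregs S1 + nregs S2]"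
    and O: "snd y = snd c' ! u"
    unfolding gstep_def by auto
  from T obtain l1 l2 m2 u2 q2' where tr: "(q,fst x,l2,m2,u2,fst y,q2') \<in> trans S2" "length l1 = nregs S1"
    "l = l1@l2" "m = replicate (nregs S1) UOld @ m2" "fst c' = Some (Inr q2')" "u = nregs S1 + u2"
    unfolding unionT_Inr by blast
  have len: "length l2 = nregs S2" "length m2 = nregs S2" "u2 < nregs S2" using t2_len[OF tr(1)] by auto
  have G2: "\<forall>i<nregs S2. cmp_holds (l2!i) (snd x) (R2!i)"
    using G guard_app[of l1 R1 l2 R2 "snd x"] len assms tr by auto
  define R2' where "R2' = map (\<lambda>i. upd_val (m2 ! i) (R2 ! i) (snd x)) [0..<nregs S2]"
  have U': "snd c' = R1 @ R2'" using U upd_app2[of m2 R2 R1 "snd x"] len assms tr unfolding R2'_def by simp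
  have "srt_step S2 (q,R2) x y (q2', R2')"
    unfolding srt_step_def using tr G2 O U' len assms
    by (intro exI[of _ l2] exI[of _ m2] exI[of _ u2]) (auto simp: R2'_def nth_append)
  then show "\<exists>c2'. srt_step S2 (q,R2) x y c2' \<and> c' = (Some (Inr (fst c2')), R1 @ snd c2')"
    using tr U' by (intro exI[of _ "(q2', R2')"]) (simp add: prod_eq_iff)
next
  assume "\<exists>c2'. srt_step S2 (q,R2) x y c2' \<and> c' = (Some (Inr (fst c2')), R1 @ snd c2')"
  then obtain c2' where st: "srt_step S2 (q,R2) x y c2'" and c': "c' = (Some (Inr (fst c2')), R1 @ snd c2')" by blast
  from st obtain l2 m2 u where tr: "(q, fst x, l2, m2, u, fst y, fst c2') \<in> trans S2"
    and G2: "\<forall>i<nregs S2. cmp_holds (l2!i) (snd x) (R2!i)"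
    and U: "snd c2' = map (\<lambda>i. upd_val (m2 ! i) (R2 ! i) (snd x)) [0..<nregs S2]"
    and O: "snd y = snd c2' ! u"
    unfolding srt_step_def by auto
  have len: "length l2 = nregs S2" "length m2 = nregs S2" "u < nregs S2" using t2_len[OF tr] by auto
  define l1 where "l1 = map (\<lambda>j. cmp_of (snd x) (R1!j)) [0..<nregs S1]"
  have T: "(Some (Inr q), fst x, l1@l2, replicate (nregs S1) UOld @ m2, nregs S1 + u, fst y, fst c') \<in> unionT S1 S2"
    using uT2[OF tr, of l1] c' by (auto simp: l1_def)
  have G: "\<forall>i < nregs S1 + nregs S2. cmp_holds ((l1@l2) ! i) (snd x) ((R1@R2) ! i)"
    using guard_app[of l1 R1 l2 R2 "snd x"] len assms G2 by (auto simp: l1_def cmp_holds_of)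
  have U': "snd c' = map (\<lambda>i. upd_val ((replicate (nregs S1) UOld @ m2) ! i) ((R1@R2) ! i) (snd x)) [0..<nregs S1 + nregs S2]"
    using upd_app2[of m2 R2 R1 "snd x"] len assms c' U by simp
  show "gstep (unionT S1 S2) (nregs S1 + nregs S2) (Some (Inr q), R1@R2) x y c'"
    unfolding gstep_def
  proof (intro exI conjI)
    show "(fst (Some (Inr q), R1@R2), fst x, l1@l2, replicate (nregs S1) UOld @ m2, nregs S1 + u, fst y, fst c') \<in> unionT S1 S2"
      using T by simp
    show "\<forall>i < nregs S1 + nregs S2. cmp_holds ((l1@l2) ! i) (snd x) (snd (Some (Inr q), R1@R2) ! i)"
      using G by simp
    show "snd c' = map (\<lambda>i. upd_val ((replicate (nregs S1) UOld @ m2) ! i) (snd (Some (Inr q), R1@R2) ! i) (snd x)) [0..<nregs S1 + nregs S2]"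
      using U' by simp
    show "snd y = snd c' ! (nregs S1 + u)" using O U c' len assms by (simp add: nth_append)
  qed
qed

lemma urun1:
  assumes "length R1 = nregs S1" "length R2 = nregs S2"
  shows "grun (unionT S1 S2) (nregs S1 + nregs S2) (Some (Inl q), R1@R2) xs ys \<longleftrightarrow> srt_run S1 (q,R1) xs ys"
  using assms(1)
proof (induction xs arbitrary: q R1 ys)
  case Nil then show ?case by (cases ys) auto
next
  case (Cons x xs)
  show ?case
  proof (cases ys)
    case Nil then show ?thesis by simp
  next
    case (Cons y ys')
    have "grun (unionT S1 S2) (nregs S1 + nregs S2) (Some (Inl q), R1@R2) (x#xs) (y#ys') \<longleftrightarrow>
      (\<exists>c1'. srt_step S1 (q,R1) x y c1' \<and> grun (unionT S1 S2) (nregs S1 + nregs S2) (Some (Inl (fst c1')), snd c1' @ R2) xs ys')"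
      by (simp add: ustep1[OF Cons.prems assms(2)]) blast
    also have "\<dots> \<longleftrightarrow> (\<exists>c1'. srt_step S1 (q,R1) x y c1' \<and> srt_run S1 c1' xs ys')"
    proof -
      { fix c1' assume "srt_step S1 (q,R1) x y c1'"
        then have "length (snd c1') = nregs S1" unfolding srt_step_def by auto
        then have "grun (unionT S1 S2) (nregs S1 + nregs S2) (Some (Inl (fst c1')), snd c1' @ R2) xs ys' \<longleftrightarrow> srt_run S1 c1' xs ys'"
          using Cons.IH[where q="fst c1'" and ?R1.0="snd c1'" and ys=ys'] by simp }
      then show ?thesis by blast
    qed
    finally show ?thesis using Cons by simp
  qed
qed

lemma urun2:
  assumes "length R1 = nregs S1" "length R2 = nregs S2"
  shows "grun (unionT S1 S2) (nregs S1 + nregs S2) (Some (Inr q), R1@R2) xs ys \<longleftrightarrow> srt_run S2 (q,R2) xs ys"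
  using assms(2)
proof (induction xs arbitrary: q R2 ys)
  case Nil then show ?case by (cases ys) auto
next
  case (Cons x xs)
  show ?case
  proof (cases ys)
    case Nil then show ?thesis by simp
  next
    case (Cons y ys')
    have "grun (unionT S1 S2) (nregs S1 + nregs S2) (Some (Inr q), R1@R2) (x#xs) (y#ys') \<longleftrightarrow>
      (\<exists>c2'. srt_step S2 (q,R2) x y c2' \<and> grun (unionT S1 S2) (nregs S1 + nregs S2) (Some (Inr (fst c2')), R1 @ snd c2') xs ys')"
      by (simp add: ustep2[OF assms(1) Cons.prems]) blast
    also have "\<dots> \<longleftrightarrow> (\<exists>c2'. srt_step S2 (q,R2) x y c2' \<and> srt_run S2 c2' xs ys')"
    proof -
      { fix c2' assume "srt_step S2 (q,R2) x y c2'"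
        then have "length (snd c2') = nregs S2" unfolding srt_step_def by auto
        then have "grun (unionT S1 S2) (nregs S1 + nregs S2) (Some (Inr (fst c2')), R1 @ snd c2') xs ys' \<longleftrightarrow> srt_run S2 c2' xs ys'"
          using Cons.IH[where q="fst c2'" and ?R2.0="snd c2'" and ys=ys'] by simp }
      then show ?thesis by blast
    qed
    finally show ?thesis using Cons by simp
  qed
qed

lemma ustep0: "gstep (unionT S1 S2) k (None, R) x y c' \<longleftrightarrow>
   gstep (unionT S1 S2) k (Some (Inl (init S1)), R) x y c' \<or> gstep (unionT S1 S2) k (Some (Inr (init S2)), R) x y c'"
  unfolding gstep_def fst_conv snd_conv unionT_None by blast

lemma urun0:
  shows "grun (unionT S1 S2) (nregs S1 + nregs S2) (None, rinit S1 @ rinit S2) xs ys \<longleftrightarrow>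
     srt_run S1 (init S1, rinit S1) xs ys \<or> srt_run S2 (init S2, rinit S2) xs ys"
proof -
  have l: "length (rinit S1) = nregs S1" "length (rinit S2) = nregs S2" using wf1 wf2 by (auto simp: wf_srt_def)
  have "grun (unionT S1 S2) (nregs S1 + nregs S2) (None, R) xs ys \<longleftrightarrow>
     grun (unionT S1 S2) (nregs S1 + nregs S2) (Some (Inl (init S1)), R) xs ys \<or>
     grun (unionT S1 S2) (nregs S1 + nregs S2) (Some (Inr (init S2)), R) xs ys" for R
    by (cases xs; cases ys; simp only: grun.simps ustep0; blast)
  then show ?thesis using urun1[OF l] urun2[OF l] by simp
qed

lemma union_sem: "srt_sem (unionM S1 S2) = srt_sem S1 \<union> srt_sem S2"
  unfolding unionM_def mk_sem by (auto simp: sem_iff urun0)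

lemma union_wf: "wf_srt (unionM S1 S2)"
  unfolding unionM_def
proof (rule mk_wf)
  show "finite (insert None (Some ` (Inl ` states S1 \<union> Inr ` states S2)))"
    using wf1 wf2 by (auto simp: wf_srt_def)
  show "length (rinit S1 @ rinit S2) = nregs S1 + nregs S2" using wf1 wf2 by (auto simp: wf_srt_def)
  fix q \<sigma> l m u \<gamma> q' assume "(q,\<sigma>,l,m,u,\<gamma>,q') \<in> unionT S1 S2"
  from unionT_cases[OF this] show "q \<in> insert None (Some ` (Inl ` states S1 \<union> Inr ` states S2)) \<and>
     q' \<in> insert None (Some ` (Inl ` states S1 \<union> Inr ` states S2)) \<and>
     length l = nregs S1 + nregs S2 \<and> length m = nregs S1 + nregs S2 \<and> u < nregs S1 + nregs S2"
    unfolding uP1_def uP2_def by (auto dest!: t1_len t2_len)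
qed simp

lemma union_af: assumes a1: "add_free S1" and a2: "add_free S2" shows "add_free (unionM S1 S2)"
  unfolding unionM_def
proof (rule mk_af)
  fix q \<sigma> l m u \<gamma> q' assume "(q,\<sigma>,l,m,u,\<gamma>,q') \<in> unionT S1 S2"
  from unionT_cases[OF this] have "\<exists>q. uP1 S1 S2 q \<sigma> l m u \<gamma> q' \<or> uP2 S1 S2 q \<sigma> l m u \<gamma> q'" by blast
  then obtain q0 where "uP1 S1 S2 q0 \<sigma> l m u \<gamma> q' \<or> uP2 S1 S2 q0 \<sigma> l m u \<gamma> q'" by blast
  then show "set m \<subseteq> {UOld, UNew}"
  proof (elim disjE)
    assume "uP1 S1 S2 q0 \<sigma> l m u \<gamma> q'"
    then obtain l1 m1 q1' where tr: "(q0,\<sigma>,l1,m1,u,\<gamma>,q1') \<in> trans S1" and mm: "m = m1 @ replicate (nregs S2) UOld"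
      unfolding uP1_def by blast
    have "set (replicate (nregs S2) UOld) \<subseteq> {UOld, UNew}" by auto
    then show ?thesis using af_D[OF a1 tr] mm by simp
  next
    assume "uP2 S1 S2 q0 \<sigma> l m u \<gamma> q'"
    then obtain l2 m2 u2 q2' where tr: "(q0,\<sigma>,l2,m2,u2,\<gamma>,q2') \<in> trans S2" and mm: "m = replicate (nregs S1) UOld @ m2"
      unfolding uP2_def by blast
    have "set (replicate (nregs S1) UOld) \<subseteq> {UOld, UNew}" by auto
    then show ?thesis using af_D[OF a2 tr] mm by simp
  qed
qed

lemma union_rinit: "rinit (unionM S1 S2) = rinit S1 @ rinit S2"
  by (simp add: unionM_def)

end

definition fr :: "nat list \<Rightarrow> nat list \<Rightarrow> nat" where
  "fr p1 p2 = (LEAST a. a \<notin> set p1 \<union> set p2)"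

lemma fr_ex: "\<exists>a<Suc (length p1 + length p2). a \<notin> set p1 \<union> set p2"
proof (rule ccontr)
  assume "\<not> ?thesis"
  then have "{..<Suc (length p1 + length p2)} \<subseteq> set p1 \<union> set p2" by auto
  then have "card {..<Suc (length p1 + length p2)} \<le> card (set p1 \<union> set p2)"
    by (intro card_mono) auto
  also have "\<dots> \<le> card (set p1) + card (set p2)" by (rule card_Un_le)
  also have "\<dots> \<le> length p1 + length p2" using card_length[of p1] card_length[of p2] by linarith
  finally show False by simp
qed

lemma fr_notin_Un: "fr p1 p2 \<notin> set p1 \<union> set p2"
proof -
  obtain a where "a \<notin> set p1 \<union> set p2" using fr_ex by blast
  then show ?thesis unfolding fr_def by (rule LeastI)
qed

lemma fr_notin: "fr p1 p2 \<notin> set p1" "fr p1 p2 \<notin> set p2"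
  using fr_notin_Un by auto

lemma fr_less: "fr p1 p2 < Suc (length p1 + length p2)"
proof -
  obtain a where a: "a < Suc (length p1 + length p2)" "a \<notin> set p1 \<union> set p2" using fr_ex by blast
  have "fr p1 p2 \<le> a" unfolding fr_def by (rule Least_le) (rule a(2))
  then show ?thesis using a by simp
qed

definition relmat :: "'d::linorder list \<Rightarrow> cmp list list" where
  "relmat R = map (\<lambda>a. map (\<lambda>b. cmp_of (R!a) (R!b)) [0..<length R]) [0..<length R]"

definition relupd :: "cmp list list \<Rightarrow> cmp list \<Rightarrow> nat \<Rightarrow> nat \<Rightarrow> cmp list list" where
  "relupd rel l f n = map (\<lambda>a. map (\<lambda>b. if a = f then (if b = f then CEq else l!b)
       else if b = f then flipc (l!a) else rel!a!b) [0..<n]) [0..<n]"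

lemma relmat_nth: "a < length R \<Longrightarrow> b < length R \<Longrightarrow> relmat R ! a ! b = cmp_of (R!a) (R!b)"
  by (simp add: relmat_def)

lemma relupd_relmat:
  assumes "f < length R"
  shows "relupd (relmat R) (map (\<lambda>a. cmp_of d (R!a)) [0..<length R]) f (length R) = relmat (R[f:=d])"
  unfolding relupd_def relmat_def length_list_update
proof (intro map_cong refl)
  fix a b assume "a \<in> set [0..<length R]" "b \<in> set [0..<length R]"
  then have ab: "a < length R" "b < length R" by auto
  show "(if a = f then (if b = f then CEq else map (\<lambda>a. cmp_of d (R!a)) [0..<length R] ! b)
       else if b = f then flipc (map (\<lambda>a. cmp_of d (R!a)) [0..<length R] ! a)
       else map (\<lambda>a. map (\<lambda>b. cmp_of (R ! a) (R ! b)) [0..<length R]) [0..<length R] ! a ! b) =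
    cmp_of (R[f := d] ! a) (R[f := d] ! b)"
    using ab assms by (auto simp: flip_cmp_of nth_list_update)
qed

lemma relupd_shape: "length (relupd rel l f n) = n" "\<forall>r\<in>set (relupd rel l f n). length r = n"
  by (auto simp: relupd_def)

lemma relmat_shape: "length (relmat R) = length R" "\<forall>r\<in>set (relmat R). length r = length R"
  by (auto simp: relmat_def)

definition mnew :: "nat \<Rightarrow> nat \<Rightarrow> upd list" where
  "mnew f n = map (\<lambda>a. if a = f then UNew else UOld) [0..<n]"

lemma upd_mnew: "f < length R \<Longrightarrow> map (\<lambda>a. upd_val (mnew f (length R) ! a) (R!a) d) [0..<length R] = R[f:=d]"
  by (rule nth_equalityI) (auto simp: mnew_def nth_list_update)

lemma guard_det: "(\<forall>a<length R. cmp_holds (l!a) d (R!a)) \<Longrightarrow> length l = length R \<Longrightarrow>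
   l = map (\<lambda>a. cmp_of d (R!a)) [0..<length R]"
  by (rule nth_equalityI) (auto simp: cmp_holds_iff)

definition npt :: "nat \<Rightarrow> upd list \<Rightarrow> nat list \<Rightarrow> nat list" where
  "npt v m p = map (\<lambda>i. if m!i = UNew then v else p!i) [0..<length p]"

lemma npt_len[simp]: "length (npt v m p) = length p"
  by (simp add: npt_def)

lemma npt_nth: "i < length p \<Longrightarrow> npt v m p ! i = (if m!i = UNew then v else p!i)"
  by (simp add: npt_def)

lemma npt_set: "set p \<subseteq> A \<Longrightarrow> v \<in> A \<Longrightarrow> set (npt v m p) \<subseteq> A"
  by (auto simp: npt_def)

lemma npt_vals:
  assumes "R' ! vp = v" "\<forall>x\<in>set p. R' ! x = R ! x" "length m = length p" "set m \<subseteq> {UOld, UNew}"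
  shows "map ((!) R') (npt vp m p) = map (\<lambda>i. upd_val (m!i) (map ((!) R) p ! i) v) [0..<length p]"
proof (rule nth_equalityI)
  fix i assume "i < length (map ((!) R') (npt vp m p))"
  then have i: "i < length p" by simp
  have "m!i \<in> {UOld, UNew}" using assms(3,4) i by (metis nth_mem subsetD)
  then show "map ((!) R') (npt vp m p) ! i = map (\<lambda>i. upd_val (m!i) (map ((!) R) p ! i) v) [0..<length p] ! i"
    using i assms(1,2) by (auto simp: npt_nth)
qed simp


declare upt_Suc[simp del]

type_synonym cst = "nat \<times> nat \<times> nat list \<times> nat list \<times> cmp list list"

definition PS :: "('a,'b,'d) srt \<Rightarrow> ('b2,'c,'d) srt \<Rightarrow> cst set" where
  "PS S1 S2 = {(q1,q2,p1,p2,rel). q1 \<in> states S1 \<and> q2 \<in> states S2 \<and> length p1 = nregs S1 \<and> length p2 = nregs S2 \<and>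
     set p1 \<subseteq> {..<Suc (nregs S1 + nregs S2)} \<and> set p2 \<subseteq> {..<Suc (nregs S1 + nregs S2)} \<and>
     length rel = Suc (nregs S1 + nregs S2) \<and> (\<forall>r\<in>set rel. length r = Suc (nregs S1 + nregs S2))}"

lemma PS_iff: "(q1,q2,p1,p2,rel) \<in> PS S1 S2 \<longleftrightarrow> q1 \<in> states S1 \<and> q2 \<in> states S2 \<and> length p1 = nregs S1 \<and> length p2 = nregs S2 \<and>
     set p1 \<subseteq> {..<Suc (nregs S1 + nregs S2)} \<and> set p2 \<subseteq> {..<Suc (nregs S1 + nregs S2)} \<and>
     length rel = Suc (nregs S1 + nregs S2) \<and> (\<forall>r\<in>set rel. length r = Suc (nregs S1 + nregs S2))"
  by (simp add: PS_def)

lemma PS_finite: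
  assumes "finite (states S1)" "finite (states S2)"
  shows "finite (PS S1 S2)"
proof -
  let ?N = "Suc (nregs S1 + nregs S2)"
  let ?A = "{p. set p \<subseteq> {..<?N} \<and> length p = nregs S1}"
  let ?B = "{p. set p \<subseteq> {..<?N} \<and> length p = nregs S2}"
  let ?C = "{rel. set rel \<subseteq> {r. set r \<subseteq> (UNIV::cmp set) \<and> length r = ?N} \<and> length rel = ?N}"
  have fA: "finite ?A" by (rule finite_lists_length_eq) simp
  have fB: "finite ?B" by (rule finite_lists_length_eq) simp
  have fC: "finite ?C" by (rule finite_lists_length_eq) (rule finite_lists_length_eq[OF finite_cmp])
  have "PS S1 S2 \<subseteq> states S1 \<times> states S2 \<times> ?A \<times> ?B \<times> ?C"
    unfolding PS_def by auto
  moreover have "finite (states S1 \<times> states S2 \<times> ?A \<times> ?B \<times> ?C)"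
    using assms fA fB fC by (intro finite_cartesian_product) auto
  ultimately show ?thesis by (rule finite_subset)
qed

definition cP :: "('a,'b,'d) srt \<Rightarrow> ('b,'c,'d) srt \<Rightarrow> cst \<Rightarrow> 'a \<Rightarrow> cmp list \<Rightarrow> upd list \<Rightarrow> nat \<Rightarrow> 'c \<Rightarrow> cst \<Rightarrow> bool" where
  "cP S1 S2 s \<sigma> l m u \<theta> s' \<longleftrightarrow> (case s of (q1,q2,p1,p2,rel) \<Rightarrow> s \<in> PS S1 S2 \<and>
    (\<exists>l1 m1 u1 \<gamma> q1' l2 m2 u2 q2'. (q1,\<sigma>,l1,m1,u1,\<gamma>,q1') \<in> trans S1 \<and> (q2,\<gamma>,l2,m2,u2,\<theta>,q2') \<in> trans S2 \<and>
     length l = Suc (nregs S1 + nregs S2) \<and>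
     l1 = map ((!) l) p1 \<and>
     l2 = map (\<lambda>b. if m1!u1 = UNew then l!b else rel!(p1!u1)!b) p2 \<and>
     m = mnew (fr p1 p2) (Suc (nregs S1 + nregs S2)) \<and>
     s' = (q1', q2', npt (fr p1 p2) m1 p1, npt (npt (fr p1 p2) m1 p1 ! u1) m2 p2,
           relupd rel l (fr p1 p2) (Suc (nregs S1 + nregs S2))) \<and>
     u = npt (npt (fr p1 p2) m1 p1 ! u1) m2 p2 ! u2))"

lemma cP_iff: "cP S1 S2 (q1,q2,p1,p2,rel) \<sigma> l m u \<theta> s' \<longleftrightarrow> (q1,q2,p1,p2,rel) \<in> PS S1 S2 \<and>
    (\<exists>l1 m1 u1 \<gamma> q1' l2 m2 u2 q2'. (q1,\<sigma>,l1,m1,u1,\<gamma>,q1') \<in> trans S1 \<and> (q2,\<gamma>,l2,m2,u2,\<theta>,q2') \<in> trans S2 \<and>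
     length l = Suc (nregs S1 + nregs S2) \<and>
     l1 = map ((!) l) p1 \<and>
     l2 = map (\<lambda>b. if m1!u1 = UNew then l!b else rel!(p1!u1)!b) p2 \<and>
     m = mnew (fr p1 p2) (Suc (nregs S1 + nregs S2)) \<and>
     s' = (q1', q2', npt (fr p1 p2) m1 p1, npt (npt (fr p1 p2) m1 p1 ! u1) m2 p2,
           relupd rel l (fr p1 p2) (Suc (nregs S1 + nregs S2))) \<and>
     u = npt (npt (fr p1 p2) m1 p1 ! u1) m2 p2 ! u2)"
  unfolding cP_def by (simp only: prod.case)

definition compT :: "('a,'b,'d) srt \<Rightarrow> ('b,'c,'d) srt \<Rightarrow> (cst \<times> 'a \<times> cmp list \<times> upd list \<times> nat \<times> 'c \<times> cst) set" where
  "compT S1 S2 = {(s,\<sigma>,l,m,u,\<theta>,s'). cP S1 S2 s \<sigma> l m u \<theta> s'}"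

lemma compT_iff: "(s,\<sigma>,l,m,u,\<theta>,s') \<in> compT S1 S2 \<longleftrightarrow> cP S1 S2 s \<sigma> l m u \<theta> s'"
  by (simp add: compT_def)

definition s0 :: "('a,'b,'d::linorder) srt \<Rightarrow> ('b2,'c,'d) srt \<Rightarrow> 'd list \<Rightarrow> cst" where
  "s0 S1 S2 R0 = (init S1, init S2, [0..<nregs S1], [nregs S1..<nregs S1 + nregs S2], relmat R0)"

definition compM :: "('a,'b,'d::{linorder,group_add}) srt \<Rightarrow> ('b,'c,'d) srt \<Rightarrow> ('a,'c,'d) srt" where
  "compM S1 S2 = mk (PS S1 S2) (s0 S1 S2 (rinit S1 @ rinit S2 @ [0])) (Suc (nregs S1 + nregs S2))
      (rinit S1 @ rinit S2 @ [0]) (compT S1 S2)"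

lemma srt_run_Nil: "srt_run S c [] ys \<longleftrightarrow> ys = []"
  by (cases ys) auto

lemma grun_Nil: "grun T k c [] ys \<longleftrightarrow> ys = []"
  by (cases ys) auto

lemma t_len: "wf_srt S \<Longrightarrow> (q,\<sigma>,l,m,u,\<gamma>,q') \<in> trans S \<Longrightarrow> length l = nregs S \<and> length m = nregs S \<and> u < nregs S \<and> q \<in> states S \<and> q' \<in> states S"
  unfolding wf_srt_def by fast


lemma upd_oldnew: "set m \<subseteq> {UOld,UNew} \<Longrightarrow> i < length m \<Longrightarrow> m!i \<noteq> UNew \<Longrightarrow> m!i = UOld"
  by (metis insertE nth_mem singletonD subsetD)

lemma c_init:
  fixes S1 :: "('a,'b,'d::{linorder,zero}) srt" and S2 :: "('b2,'c,'d) srt"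
  assumes wf1: "wf_srt S1" and wf2: "wf_srt S2"
  shows "s0 S1 S2 (rinit S1 @ rinit S2 @ [0]) \<in> PS S1 S2"
    and "map ((!) (rinit S1 @ rinit S2 @ [0])) [0..<nregs S1] = rinit S1"
    and "map ((!) (rinit S1 @ rinit S2 @ [0])) [nregs S1..<nregs S1 + nregs S2] = rinit S2"
proof -
  have l1: "length (rinit S1) = nregs S1" using wf1 by (simp add: wf_srt_def)
  have l2: "length (rinit S2) = nregs S2" using wf2 by (simp add: wf_srt_def)
  have i1: "init S1 \<in> states S1" using wf1 by (simp add: wf_srt_def)
  have i2: "init S2 \<in> states S2" using wf2 by (simp add: wf_srt_def)
  show "s0 S1 S2 (rinit S1 @ rinit S2 @ [0]) \<in> PS S1 S2"
    unfolding s0_def PS_iff using i1 i2 l1 l2 relmat_shape[of "rinit S1 @ rinit S2 @ [0]"] by auto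
  show "map ((!) (rinit S1 @ rinit S2 @ [0])) [0..<nregs S1] = rinit S1"
    by (rule nth_equalityI) (simp_all add: l1 nth_append)
  show "map ((!) (rinit S1 @ rinit S2 @ [0])) [nregs S1..<nregs S1 + nregs S2] = rinit S2"
    by (rule nth_equalityI) (simp_all add: l1 l2 nth_append)
qed

context
  fixes S1 :: "('a,'b,'d::{linorder,group_add}) srt" and S2 :: "('b,'c,'d) srt"
  assumes wf1: "wf_srt S1" and wf2: "wf_srt S2" and af1: "add_free S1" and af2: "add_free S2"
begin

abbreviation "NN \<equiv> Suc (nregs S1 + nregs S2)"

lemma c_sound:
  assumes I: "(q1,q2,p1,p2,rel) \<in> PS S1 S2" "length R = NN" "rel = relmat R"
    and st: "gstep (compT S1 S2) NN ((q1,q2,p1,p2,rel),R) (\<sigma>,d) (\<theta>,w) (s',R')"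
  shows "\<exists>\<gamma> v q1' q2' p1' p2' rel'. s' = (q1',q2',p1',p2',rel') \<and>
     srt_step S1 (q1, map ((!) R) p1) (\<sigma>,d) (\<gamma>,v) (q1', map ((!) R') p1') \<and>
     srt_step S2 (q2, map ((!) R) p2) (\<gamma>,v) (\<theta>,w) (q2', map ((!) R') p2') \<and>
     (q1',q2',p1',p2',rel') \<in> PS S1 S2 \<and> length R' = NN \<and> rel' = relmat R'"
proof -
  from st obtain l m u where T: "cP S1 S2 (q1,q2,p1,p2,rel) \<sigma> l m u \<theta> s'"
    and G: "\<forall>a<NN. cmp_holds (l!a) d (R!a)"
    and U: "R' = map (\<lambda>a. upd_val (m!a) (R!a) d) [0..<NN]"
    and O: "w = R'!u"
    unfolding gstep_def compT_iff by auto
  from T[unfolded cP_iff] obtain l1 m1 u1 \<gamma> q1' l2 m2 u2 q2' where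
    tr1: "(q1,\<sigma>,l1,m1,u1,\<gamma>,q1') \<in> trans S1" and tr2: "(q2,\<gamma>,l2,m2,u2,\<theta>,q2') \<in> trans S2"
    and ll: "length l = NN" and l1: "l1 = map ((!) l) p1"
    and l2: "l2 = map (\<lambda>b. if m1!u1 = UNew then l!b else rel!(p1!u1)!b) p2"
    and mm: "m = mnew (fr p1 p2) NN"
    and s': "s' = (q1', q2', npt (fr p1 p2) m1 p1, npt (npt (fr p1 p2) m1 p1 ! u1) m2 p2, relupd rel l (fr p1 p2) NN)"
    and uu: "u = npt (npt (fr p1 p2) m1 p1 ! u1) m2 p2 ! u2"
    by blast
  define f where "f = fr p1 p2"
  have L1: "length l1 = nregs S1" "length m1 = nregs S1" "u1 < nregs S1" "q1' \<in> states S1" using t_len[OF wf1 tr1] by auto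
  have L2: "length l2 = nregs S2" "length m2 = nregs S2" "u2 < nregs S2" "q2' \<in> states S2" using t_len[OF wf2 tr2] by auto
  have P: "length p1 = nregs S1" "length p2 = nregs S2" "set p1 \<subseteq> {..<NN}" "set p2 \<subseteq> {..<NN}"
    using I(1) by (simp_all add: PS_iff)
  have f: "f < NN" "f \<notin> set p1" "f \<notin> set p2" using fr_less[of p1 p2] fr_notin[of p1 p2] P unfolding f_def by auto
  have R': "R' = R[f:=d]" using U mm upd_mnew[of f R d] I(2) f unfolding f_def by simp
  have lR: "l = map (\<lambda>a. cmp_of d (R!a)) [0..<length R]" using guard_det[of R l d] G ll I(2) by simp
  have am1: "set m1 \<subseteq> {UOld,UNew}" using af_D[OF af1 tr1] .
  have am2: "set m2 \<subseteq> {UOld,UNew}" using af_D[OF af2 tr2] .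
  define p1' where "p1' = npt f m1 p1"
  define v where "v = R'!(p1'!u1)"
  define p2' where "p2' = npt (p1'!u1) m2 p2"
  have keep1: "\<forall>x\<in>set p1. R'!x = R!x"
  proof
    fix x assume "x \<in> set p1" then have "x \<noteq> f" using f(2) by auto
    then show "R'!x = R!x" using R' by simp
  qed
  have keep2: "\<forall>x\<in>set p2. R'!x = R!x"
  proof
    fix x assume "x \<in> set p2" then have "x \<noteq> f" using f(3) by auto
    then show "R'!x = R!x" using R' by simp
  qed
  have Rf: "R'!f = d" using R' f(1) I(2) by simp
  have V1: "map ((!) R') p1' = map (\<lambda>i. upd_val (m1!i) (map ((!) R) p1 ! i) d) [0..<nregs S1]"
    unfolding p1'_def using npt_vals[OF Rf keep1] L1 P am1 by simp
  have V2: "map ((!) R') p2' = map (\<lambda>j. upd_val (m2!j) (map ((!) R) p2 ! j) v) [0..<nregs S2]"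
    unfolding p2'_def using npt_vals[OF v_def[symmetric] keep2] L2 P am2 by simp
  have step1: "srt_step S1 (q1, map ((!) R) p1) (\<sigma>,d) (\<gamma>,v) (q1', map ((!) R') p1')"
    unfolding srt_step_def fst_conv snd_conv
  proof (intro exI conjI)
    show "(q1, \<sigma>, l1, m1, u1, \<gamma>, q1') \<in> trans S1" by (rule tr1)
    show "\<forall>i<nregs S1. cmp_holds (l1 ! i) d (map ((!) R) p1 ! i)"
    proof (intro allI impI)
      fix i assume i: "i < nregs S1"
      then have "p1!i < NN" using P by (metis lessThan_iff nth_mem subsetD)
      then show "cmp_holds (l1 ! i) d (map ((!) R) p1 ! i)" using G i P l1 by simp
    qed
    show "map ((!) R') p1' = map (\<lambda>i. upd_val (m1!i) (map ((!) R) p1 ! i) d) [0..<nregs S1]" by (rule V1)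
    show "v = map ((!) R') p1' ! u1" using L1 P unfolding v_def p1'_def by simp
  qed
  have u1p: "p1!u1 < NN" using P L1 by (metis lessThan_iff nth_mem subsetD)
  have step2: "srt_step S2 (q2, map ((!) R) p2) (\<gamma>,v) (\<theta>,w) (q2', map ((!) R') p2')"
    unfolding srt_step_def fst_conv snd_conv
  proof (intro exI conjI)
    show "(q2, \<gamma>, l2, m2, u2, \<theta>, q2') \<in> trans S2" by (rule tr2)
    show "\<forall>j<nregs S2. cmp_holds (l2 ! j) v (map ((!) R) p2 ! j)"
    proof (intro allI impI)
      fix j assume j: "j < nregs S2"
      then have b: "p2!j < NN" using P by (metis lessThan_iff nth_mem subsetD)
      show "cmp_holds (l2 ! j) v (map ((!) R) p2 ! j)"
      proof (cases "m1!u1 = UNew")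
        case True
        then have "v = d" using Rf L1 P unfolding v_def p1'_def by (simp add: npt_nth)
        then show ?thesis using True G b j P l2 by simp
      next
        case False
        then have "p1'!u1 = p1!u1" using L1 P unfolding p1'_def by (simp add: npt_nth)
        moreover have "p1!u1 \<noteq> f" using f(2) L1 P by (metis nth_mem)
        ultimately have "v = R!(p1!u1)" using R' unfolding v_def by simp
        moreover have "rel!(p1!u1)!(p2!j) = cmp_of (R!(p1!u1)) (R!(p2!j))"
          using I(2,3) b u1p by (simp add: relmat_nth)
        ultimately show ?thesis using False j P l2 by (simp add: cmp_holds_of)
      qed
    qed
    show "map ((!) R') p2' = map (\<lambda>j. upd_val (m2!j) (map ((!) R) p2 ! j) v) [0..<nregs S2]" by (rule V2)
    show "w = map ((!) R') p2' ! u2" using L2 P O uu unfolding p2'_def p1'_def f_def by simp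
  qed
  have p1'set: "set p1' \<subseteq> {..<NN}" unfolding p1'_def using P f by (intro npt_set) auto
  have "p1'!u1 \<in> {..<NN}" using p1'set L1 P unfolding p1'_def by (metis npt_len nth_mem subsetD)
  then have p2'set: "set p2' \<subseteq> {..<NN}" unfolding p2'_def using P by (intro npt_set) auto
  have PS': "(q1',q2',p1',p2',relupd rel l f NN) \<in> PS S1 S2"
    unfolding PS_iff using L1 L2 P p1'set p2'set relupd_shape[of rel l f NN]
    unfolding p1'_def p2'_def by simp
  have rel': "relupd rel l f NN = relmat R'"
    using relupd_relmat[of f R d] I f(1) lR R' by simp
  have lenR': "length R' = NN" using R' I(2) by simp
  show ?thesis
    using step1 step2 PS' rel' lenR' s' unfolding p1'_def p2'_def f_def by blast
qed


lemma c_complete: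
  assumes I: "(q1,q2,p1,p2,rel) \<in> PS S1 S2" "length R = NN" "rel = relmat R"
    and st1: "srt_step S1 (q1, map ((!) R) p1) (\<sigma>,d) (\<gamma>,v) c1"
    and st2: "srt_step S2 (q2, map ((!) R) p2) (\<gamma>,v) (\<theta>,w) c2"
  shows "\<exists>p1' p2' rel' R'. gstep (compT S1 S2) NN ((q1,q2,p1,p2,rel),R) (\<sigma>,d) (\<theta>,w) ((fst c1, fst c2, p1', p2', rel'), R') \<and>
     (fst c1, fst c2, p1', p2', rel') \<in> PS S1 S2 \<and> length R' = NN \<and> rel' = relmat R' \<and>
     snd c1 = map ((!) R') p1' \<and> snd c2 = map ((!) R') p2'"
proof -
  from st1 obtain l1 m1 u1 where tr1: "(q1,\<sigma>,l1,m1,u1,\<gamma>,fst c1) \<in> trans S1"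
    and G1: "\<forall>i<nregs S1. cmp_holds (l1!i) d (map ((!) R) p1 ! i)"
    and U1: "snd c1 = map (\<lambda>i. upd_val (m1!i) (map ((!) R) p1 ! i) d) [0..<nregs S1]"
    and O1: "v = snd c1 ! u1"
    unfolding srt_step_def fst_conv snd_conv by blast
  from st2 obtain l2 m2 u2 where tr2: "(q2,\<gamma>,l2,m2,u2,\<theta>,fst c2) \<in> trans S2"
    and G2: "\<forall>j<nregs S2. cmp_holds (l2!j) v (map ((!) R) p2 ! j)"
    and U2: "snd c2 = map (\<lambda>j. upd_val (m2!j) (map ((!) R) p2 ! j) v) [0..<nregs S2]"
    and O2: "w = snd c2 ! u2"
    unfolding srt_step_def fst_conv snd_conv by blast
  have L1: "length l1 = nregs S1" "length m1 = nregs S1" "u1 < nregs S1" "fst c1 \<in> states S1" using t_len[OF wf1 tr1] by auto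
  have L2: "length l2 = nregs S2" "length m2 = nregs S2" "u2 < nregs S2" "fst c2 \<in> states S2" using t_len[OF wf2 tr2] by auto
  have P: "length p1 = nregs S1" "length p2 = nregs S2" "set p1 \<subseteq> {..<NN}" "set p2 \<subseteq> {..<NN}"
    using I(1) by (simp_all add: PS_iff)
  define f where "f = fr p1 p2"
  have f: "f < NN" "f \<notin> set p1" "f \<notin> set p2" using fr_less[of p1 p2] fr_notin[of p1 p2] P unfolding f_def by auto
  define l where "l = map (\<lambda>a. cmp_of d (R!a)) [0..<NN]"
  define R' where "R' = R[f:=d]"
  define p1' where "p1' = npt f m1 p1"
  define p2' where "p2' = npt (p1'!u1) m2 p2"
  have am1: "set m1 \<subseteq> {UOld,UNew}" using af_D[OF af1 tr1] .
  have am2: "set m2 \<subseteq> {UOld,UNew}" using af_D[OF af2 tr2] .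
  have keep1: "\<forall>x\<in>set p1. R'!x = R!x"
  proof
    fix x assume "x \<in> set p1" then have "x \<noteq> f" using f(2) by auto
    then show "R'!x = R!x" unfolding R'_def by simp
  qed
  have keep2: "\<forall>x\<in>set p2. R'!x = R!x"
  proof
    fix x assume "x \<in> set p2" then have "x \<noteq> f" using f(3) by auto
    then show "R'!x = R!x" unfolding R'_def by simp
  qed
  have Rf: "R'!f = d" using f(1) I(2) unfolding R'_def by simp
  have V1: "map ((!) R') p1' = snd c1"
    unfolding p1'_def U1 using npt_vals[OF Rf keep1] L1 P am1 by simp
  have vv: "R'!(p1'!u1) = v"
  proof -
    have "R'!(p1'!u1) = map ((!) R') p1' ! u1" using L1 P unfolding p1'_def by simp
    then show ?thesis using V1 O1 by simp
  qed
  have V2: "map ((!) R') p2' = snd c2"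
    unfolding p2'_def U2 using npt_vals[OF vv keep2] L2 P am2 by simp
  have u1p: "p1!u1 < NN" using P L1 by (metis lessThan_iff nth_mem subsetD)
  have l1e: "l1 = map ((!) l) p1"
  proof (rule nth_equalityI)
    show "length l1 = length (map ((!) l) p1)" using L1 P by simp
    fix i assume "i < length l1"
    then have i: "i < nregs S1" using L1 by simp
    then have b: "p1!i < NN" using P by (metis lessThan_iff nth_mem subsetD)
    have "l1!i = cmp_of d (R!(p1!i))" using G1 i P by (simp add: cmp_holds_iff)
    then show "l1!i = map ((!) l) p1 ! i" using b i P unfolding l_def by simp
  qed
  have l2e: "l2 = map (\<lambda>b. if m1!u1 = UNew then l!b else rel!(p1!u1)!b) p2"
  proof (rule nth_equalityI)
    show "length l2 = length (map (\<lambda>b. if m1!u1 = UNew then l!b else rel!(p1!u1)!b) p2)" using L2 P by simp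
    fix j assume "j < length l2"
    then have j: "j < nregs S2" using L2 by simp
    then have b: "p2!j < NN" using P by (metis lessThan_iff nth_mem subsetD)
    have lj: "l2!j = cmp_of v (R!(p2!j))" using G2 j P by (simp add: cmp_holds_iff)
    have vu: "v = upd_val (m1!u1) (R!(p1!u1)) d" using O1 U1 L1 P by simp
    show "l2!j = map (\<lambda>b. if m1!u1 = UNew then l!b else rel!(p1!u1)!b) p2 ! j"
    proof (cases "m1!u1 = UNew")
      case True
      then show ?thesis using lj vu b j P unfolding l_def by simp
    next
      case False
      then have "m1!u1 = UOld" using upd_oldnew[OF am1] L1 by simp
      then have "v = R!(p1!u1)" using vu by simp
      then show ?thesis using lj False b j P u1p I(2,3) by (simp add: relmat_nth)
    qed
  qed
  have p1'set: "set p1' \<subseteq> {..<NN}" unfolding p1'_def using P f by (intro npt_set) auto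
  have "p1'!u1 \<in> {..<NN}" using p1'set L1 P unfolding p1'_def by (metis npt_len nth_mem subsetD)
  then have p2'set: "set p2' \<subseteq> {..<NN}" unfolding p2'_def using P by (intro npt_set) auto
  have PS': "(fst c1, fst c2, p1', p2', relupd rel l f NN) \<in> PS S1 S2"
    unfolding PS_iff using L1 L2 P p1'set p2'set relupd_shape[of rel l f NN]
    unfolding p1'_def p2'_def by simp
  have rel': "relupd rel l f NN = relmat R'"
    using relupd_relmat[of f R d] I f(1) unfolding l_def R'_def by simp
  have lenR': "length R' = NN" using I(2) unfolding R'_def by simp
  have cp: "cP S1 S2 (q1,q2,p1,p2,rel) \<sigma> l (mnew f NN) (p2'!u2) \<theta> (fst c1, fst c2, p1', p2', relupd rel l f NN)"
    unfolding cP_iff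
    apply (rule conjI[OF I(1)])
    apply (rule exI[of _ l1], rule exI[of _ m1], rule exI[of _ u1], rule exI[of _ \<gamma>], rule exI[of _ "fst c1"],
           rule exI[of _ l2], rule exI[of _ m2], rule exI[of _ u2], rule exI[of _ "fst c2"])
    using tr1 tr2 l1e l2e unfolding p1'_def p2'_def f_def l_def by simp
  have gs: "gstep (compT S1 S2) NN ((q1,q2,p1,p2,rel),R) (\<sigma>,d) (\<theta>,w) ((fst c1, fst c2, p1', p2', relupd rel l f NN), R')"
    unfolding gstep_def fst_conv snd_conv
  proof (intro exI conjI)
    show "((q1,q2,p1,p2,rel), \<sigma>, l, mnew f NN, p2'!u2, \<theta>, (fst c1, fst c2, p1', p2', relupd rel l f NN)) \<in> compT S1 S2"
      unfolding compT_iff by (rule cp)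
    show "\<forall>i<NN. cmp_holds (l ! i) d (R ! i)" unfolding l_def by (simp add: cmp_holds_of)
    show "R' = map (\<lambda>i. upd_val (mnew f NN ! i) (R ! i) d) [0..<NN]"
      using upd_mnew[of f R d] f(1) I(2) unfolding R'_def by simp
    show "w = R' ! (p2'!u2)"
    proof -
      have "R' ! (p2'!u2) = map ((!) R') p2' ! u2" using L2 P unfolding p2'_def by simp
      then show ?thesis using V2 O2 by simp
    qed
  qed
  show ?thesis
    apply (rule exI[of _ p1'], rule exI[of _ p2'], rule exI[of _ "relupd rel l f NN"], rule exI[of _ R'])
    using gs PS' rel' lenR' V1 V2 by simp
qed

lemma c_run:
  assumes "(q1,q2,p1,p2,rel) \<in> PS S1 S2" "length R = NN" "rel = relmat R"
  shows "grun (compT S1 S2) NN ((q1,q2,p1,p2,rel),R) xs zs \<longleftrightarrow>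
    (\<exists>ys. srt_run S1 (q1, map ((!) R) p1) xs ys \<and> srt_run S2 (q2, map ((!) R) p2) ys zs)"
  using assms
proof (induction xs arbitrary: q1 q2 p1 p2 rel R zs)
  case Nil
  then show ?case by (simp add: grun_Nil srt_run_Nil)
next
  case (Cons x xs)
  obtain \<sigma> d where x: "x = (\<sigma>,d)" by (cases x)
  show ?case
  proof
    assume H: "grun (compT S1 S2) NN ((q1,q2,p1,p2,rel),R) (x#xs) zs"
    then obtain z zs' where zs: "zs = z#zs'" by (cases zs) auto
    obtain \<theta> w where z: "z = (\<theta>,w)" by (cases z)
    from H obtain c' where st: "gstep (compT S1 S2) NN ((q1,q2,p1,p2,rel),R) (\<sigma>,d) (\<theta>,w) c'"
      and run: "grun (compT S1 S2) NN c' xs zs'" using zs z x by auto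
    obtain s' R' where c': "c' = (s',R')" by (cases c')
    from c_sound[OF Cons.prems st[unfolded c']] obtain \<gamma> v q1' q2' p1' p2' rel' where
      s': "s' = (q1',q2',p1',p2',rel')"
      and st1: "srt_step S1 (q1, map ((!) R) p1) (\<sigma>,d) (\<gamma>,v) (q1', map ((!) R') p1')"
      and st2: "srt_step S2 (q2, map ((!) R) p2) (\<gamma>,v) (\<theta>,w) (q2', map ((!) R') p2')"
      and inv: "(q1',q2',p1',p2',rel') \<in> PS S1 S2" "length R' = NN" "rel' = relmat R'" by blast
    from Cons.IH[OF inv] run c' s' obtain ys where
      r1: "srt_run S1 (q1', map ((!) R') p1') xs ys" and r2: "srt_run S2 (q2', map ((!) R') p2') ys zs'" by blast
    have "srt_run S1 (q1, map ((!) R) p1) (x#xs) ((\<gamma>,v)#ys)" using st1 r1 x by auto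
    moreover have "srt_run S2 (q2, map ((!) R) p2) ((\<gamma>,v)#ys) zs" using st2 r2 zs z by auto
    ultimately show "\<exists>ys. srt_run S1 (q1, map ((!) R) p1) (x#xs) ys \<and> srt_run S2 (q2, map ((!) R) p2) ys zs" by blast
  next
    assume "\<exists>ys. srt_run S1 (q1, map ((!) R) p1) (x#xs) ys \<and> srt_run S2 (q2, map ((!) R) p2) ys zs"
    then obtain ys where r1: "srt_run S1 (q1, map ((!) R) p1) (x#xs) ys" and r2: "srt_run S2 (q2, map ((!) R) p2) ys zs" by blast
    then obtain y ys' where ys: "ys = y#ys'" by (cases ys) auto
    then obtain z zs' where zs: "zs = z#zs'" using r2 by (cases zs) auto
    obtain \<gamma> v where y: "y = (\<gamma>,v)" by (cases y)
    obtain \<theta> w where z: "z = (\<theta>,w)" by (cases z)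
    from r1 ys y x obtain c1 where st1: "srt_step S1 (q1, map ((!) R) p1) (\<sigma>,d) (\<gamma>,v) c1" and r1': "srt_run S1 c1 xs ys'" by auto
    from r2 ys y zs z obtain c2 where st2: "srt_step S2 (q2, map ((!) R) p2) (\<gamma>,v) (\<theta>,w) c2" and r2': "srt_run S2 c2 ys' zs'" by auto
    from c_complete[OF Cons.prems st1 st2] obtain p1' p2' rel' R' where
      gs: "gstep (compT S1 S2) NN ((q1,q2,p1,p2,rel),R) (\<sigma>,d) (\<theta>,w) ((fst c1, fst c2, p1', p2', rel'), R')"
      and inv: "(fst c1, fst c2, p1', p2', rel') \<in> PS S1 S2" "length R' = NN" "rel' = relmat R'"
      and e1: "snd c1 = map ((!) R') p1'" and e2: "snd c2 = map ((!) R') p2'" by blast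
    have "srt_run S1 (fst c1, map ((!) R') p1') xs ys'" using r1' e1 by (metis prod.collapse)
    moreover have "srt_run S2 (fst c2, map ((!) R') p2') ys' zs'" using r2' e2 by (metis prod.collapse)
    ultimately have gr: "grun (compT S1 S2) NN ((fst c1, fst c2, p1', p2', rel'), R') xs zs'"
      using Cons.IH[OF inv] by blast
    have "grun (compT S1 S2) NN ((q1,q2,p1,p2,rel),R) ((\<sigma>,d)#xs) ((\<theta>,w)#zs')"
      using gs gr by (simp only: grun.simps) blast
    then show "grun (compT S1 S2) NN ((q1,q2,p1,p2,rel),R) (x#xs) zs" using x zs z by simp
  qed
qed

lemma comp_sem: "srt_sem (compM S1 S2) = rel_comp (srt_sem S1) (srt_sem S2)"
proof -
  have l: "length (rinit S1 @ rinit S2 @ [0]) = NN" using wf1 wf2 by (simp add: wf_srt_def)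
  obtain a b c e g where s: "s0 S1 S2 (rinit S1 @ rinit S2 @ [0]) = (a,b,c,e,g)" by (cases "s0 S1 S2 (rinit S1 @ rinit S2 @ [0])")
  have abc: "a = init S1" "b = init S2" "c = [0..<nregs S1]" "e = [nregs S1..<nregs S1 + nregs S2]" "g = relmat (rinit S1 @ rinit S2 @ [0])"
    using s unfolding s0_def by auto
  have r: "grun (compT S1 S2) NN (s0 S1 S2 (rinit S1 @ rinit S2 @ [0]), rinit S1 @ rinit S2 @ [0]) xs zs \<longleftrightarrow>
      (\<exists>ys. srt_run S1 (init S1, rinit S1) xs ys \<and> srt_run S2 (init S2, rinit S2) ys zs)" for xs zs
    using c_run[of a b c e g "rinit S1 @ rinit S2 @ [0]" xs zs] c_init[OF wf1 wf2] s abc l by simp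
  show ?thesis unfolding compM_def mk_sem set_eq_iff mem_Collect_eq rel_comp_sem r by simp
qed

lemma c_trans_ok:
  assumes "cP S1 S2 s \<sigma> l m u \<theta> s'"
  shows "s \<in> PS S1 S2 \<and> s' \<in> PS S1 S2 \<and> length l = NN \<and> length m = NN \<and> u < NN \<and> set m \<subseteq> {UOld, UNew}"
proof -
  obtain q1 q2 p1 p2 rel where s: "s = (q1,q2,p1,p2,rel)" by (cases s)
  from assms[unfolded s cP_iff] obtain l1 m1 u1 \<gamma> q1' l2 m2 u2 q2' where
    I: "(q1,q2,p1,p2,rel) \<in> PS S1 S2" and
    tr1: "(q1,\<sigma>,l1,m1,u1,\<gamma>,q1') \<in> trans S1" and tr2: "(q2,\<gamma>,l2,m2,u2,\<theta>,q2') \<in> trans S2"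
    and ll: "length l = NN"
    and mm: "m = mnew (fr p1 p2) NN"
    and s': "s' = (q1', q2', npt (fr p1 p2) m1 p1, npt (npt (fr p1 p2) m1 p1 ! u1) m2 p2, relupd rel l (fr p1 p2) NN)"
    and uu: "u = npt (npt (fr p1 p2) m1 p1 ! u1) m2 p2 ! u2"
    by blast
  define f where "f = fr p1 p2"
  have L1: "length l1 = nregs S1" "length m1 = nregs S1" "u1 < nregs S1" "q1' \<in> states S1" using t_len[OF wf1 tr1] by auto
  have L2: "length l2 = nregs S2" "length m2 = nregs S2" "u2 < nregs S2" "q2' \<in> states S2" using t_len[OF wf2 tr2] by auto
  have P: "length p1 = nregs S1" "length p2 = nregs S2" "set p1 \<subseteq> {..<NN}" "set p2 \<subseteq> {..<NN}"
    using I by (simp_all add: PS_iff)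
  have f: "f < NN" using fr_less[of p1 p2] P unfolding f_def by auto
  define p1' where "p1' = npt f m1 p1"
  define p2' where "p2' = npt (p1'!u1) m2 p2"
  have p1'set: "set p1' \<subseteq> {..<NN}" unfolding p1'_def using P f by (intro npt_set) auto
  have "p1'!u1 \<in> {..<NN}" using p1'set L1 P unfolding p1'_def by (metis npt_len nth_mem subsetD)
  then have p2'set: "set p2' \<subseteq> {..<NN}" unfolding p2'_def using P by (intro npt_set) auto
  have PS': "s' \<in> PS S1 S2"
    unfolding s' PS_iff using L1 L2 P p1'set p2'set relupd_shape[of rel l f NN]
    unfolding p1'_def p2'_def f_def by simp
  have "u \<in> set p2'" using uu L2 P unfolding p2'_def p1'_def f_def by (metis npt_len nth_mem)
  then have "u < NN" using p2'set by auto
  moreover have "length m = NN" "set m \<subseteq> {UOld, UNew}" using mm by (auto simp: mnew_def)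
  ultimately show ?thesis using I s PS' ll by simp
qed

lemma comp_wf: "wf_srt (compM S1 S2)"
  unfolding compM_def
proof (rule mk_wf)
  show "finite (PS S1 S2)" using wf1 wf2 by (intro PS_finite) (simp_all add: wf_srt_def)
  show "s0 S1 S2 (rinit S1 @ rinit S2 @ [0]) \<in> PS S1 S2" by (rule c_init(1)[OF wf1 wf2])
  show "length (rinit S1 @ rinit S2 @ [0]) = NN" using wf1 wf2 by (simp add: wf_srt_def)
  fix q \<sigma> l m u \<gamma> q' assume "(q, \<sigma>, l, m, u, \<gamma>, q') \<in> compT S1 S2"
  then show "q \<in> PS S1 S2 \<and> q' \<in> PS S1 S2 \<and> length l = NN \<and> length m = NN \<and> u < NN"
    using c_trans_ok unfolding compT_iff by blast
qed

lemma comp_af: "add_free (compM S1 S2)"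
  unfolding compM_def
  by (rule mk_af) (use c_trans_ok in \<open>auto simp: compT_iff\<close>)

end

lemma comp_rinit: "rinit (compM S1 S2) = rinit S1 @ rinit S2 @ [0]"
  by (simp add: compM_def)


definition iP :: "('a,'b,'d) srt \<Rightarrow> ('a,'b,'d) srt \<Rightarrow> cst \<Rightarrow> 'a \<Rightarrow> cmp list \<Rightarrow> upd list \<Rightarrow> nat \<Rightarrow> 'b \<Rightarrow> cst \<Rightarrow> bool" where
  "iP S1 S2 s \<sigma> l m u \<gamma> s' \<longleftrightarrow> (case s of (q1,q2,p1,p2,rel) \<Rightarrow> s \<in> PS S1 S2 \<and>
    (\<exists>l1 m1 u1 q1' l2 m2 u2 q2'. (q1,\<sigma>,l1,m1,u1,\<gamma>,q1') \<in> trans S1 \<and> (q2,\<sigma>,l2,m2,u2,\<gamma>,q2') \<in> trans S2 \<and>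
     length l = Suc (nregs S1 + nregs S2) \<and>
     l1 = map ((!) l) p1 \<and> l2 = map ((!) l) p2 \<and>
     m = mnew (fr p1 p2) (Suc (nregs S1 + nregs S2)) \<and>
     s' = (q1', q2', npt (fr p1 p2) m1 p1, npt (fr p1 p2) m2 p2,
           relupd rel l (fr p1 p2) (Suc (nregs S1 + nregs S2))) \<and>
     u = npt (fr p1 p2) m1 p1 ! u1 \<and>
     relupd rel l (fr p1 p2) (Suc (nregs S1 + nregs S2)) ! (npt (fr p1 p2) m1 p1 ! u1) ! (npt (fr p1 p2) m2 p2 ! u2) = CEq))"

lemma iP_iff: "iP S1 S2 (q1,q2,p1,p2,rel) \<sigma> l m u \<gamma> s' \<longleftrightarrow> (q1,q2,p1,p2,rel) \<in> PS S1 S2 \<and>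
    (\<exists>l1 m1 u1 q1' l2 m2 u2 q2'. (q1,\<sigma>,l1,m1,u1,\<gamma>,q1') \<in> trans S1 \<and> (q2,\<sigma>,l2,m2,u2,\<gamma>,q2') \<in> trans S2 \<and>
     length l = Suc (nregs S1 + nregs S2) \<and>
     l1 = map ((!) l) p1 \<and> l2 = map ((!) l) p2 \<and>
     m = mnew (fr p1 p2) (Suc (nregs S1 + nregs S2)) \<and>
     s' = (q1', q2', npt (fr p1 p2) m1 p1, npt (fr p1 p2) m2 p2,
           relupd rel l (fr p1 p2) (Suc (nregs S1 + nregs S2))) \<and>
     u = npt (fr p1 p2) m1 p1 ! u1 \<and>
     relupd rel l (fr p1 p2) (Suc (nregs S1 + nregs S2)) ! (npt (fr p1 p2) m1 p1 ! u1) ! (npt (fr p1 p2) m2 p2 ! u2) = CEq)"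
  unfolding iP_def by (simp only: prod.case)

definition interT :: "('a,'b,'d) srt \<Rightarrow> ('a,'b,'d) srt \<Rightarrow> (cst \<times> 'a \<times> cmp list \<times> upd list \<times> nat \<times> 'b \<times> cst) set" where
  "interT S1 S2 = {(s,\<sigma>,l,m,u,\<gamma>,s'). iP S1 S2 s \<sigma> l m u \<gamma> s'}"

lemma interT_iff: "(s,\<sigma>,l,m,u,\<gamma>,s') \<in> interT S1 S2 \<longleftrightarrow> iP S1 S2 s \<sigma> l m u \<gamma> s'"
  by (simp add: interT_def)

definition interM :: "('a,'b,'d::{linorder,group_add}) srt \<Rightarrow> ('a,'b,'d) srt \<Rightarrow> ('a,'b,'d) srt" where
  "interM S1 S2 = mk (PS S1 S2) (s0 S1 S2 (rinit S1 @ rinit S2 @ [0])) (Suc (nregs S1 + nregs S2))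
      (rinit S1 @ rinit S2 @ [0]) (interT S1 S2)"

lemma interM_rinit: "rinit (interM S1 S2) = rinit S1 @ rinit S2 @ [0]"
  by (simp add: interM_def)

context
  fixes S1 :: "('a,'b,'d::{linorder,group_add}) srt" and S2 :: "('a,'b,'d) srt"
  assumes wf1: "wf_srt S1" and wf2: "wf_srt S2" and af1: "add_free S1" and af2: "add_free S2"
begin

abbreviation "NI \<equiv> Suc (nregs S1 + nregs S2)"

lemma i_sound:
  assumes I: "(q1,q2,p1,p2,rel) \<in> PS S1 S2" "length R = NI" "rel = relmat R"
    and st: "gstep (interT S1 S2) NI ((q1,q2,p1,p2,rel),R) (\<sigma>,d) (\<gamma>,w) (s',R')"
  shows "\<exists>q1' q2' p1' p2' rel'. s' = (q1',q2',p1',p2',rel') \<and>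
     srt_step S1 (q1, map ((!) R) p1) (\<sigma>,d) (\<gamma>,w) (q1', map ((!) R') p1') \<and>
     srt_step S2 (q2, map ((!) R) p2) (\<sigma>,d) (\<gamma>,w) (q2', map ((!) R') p2') \<and>
     (q1',q2',p1',p2',rel') \<in> PS S1 S2 \<and> length R' = NI \<and> rel' = relmat R'"
proof -
  from st obtain l m u where T: "iP S1 S2 (q1,q2,p1,p2,rel) \<sigma> l m u \<gamma> s'"
    and G: "\<forall>a<NI. cmp_holds (l!a) d (R!a)"
    and U: "R' = map (\<lambda>a. upd_val (m!a) (R!a) d) [0..<NI]"
    and O: "w = R'!u"
    unfolding gstep_def interT_iff by auto
  from T[unfolded iP_iff] obtain l1 m1 u1 q1' l2 m2 u2 q2' where
    tr1: "(q1,\<sigma>,l1,m1,u1,\<gamma>,q1') \<in> trans S1" and tr2: "(q2,\<sigma>,l2,m2,u2,\<gamma>,q2') \<in> trans S2"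
    and ll: "length l = NI" and l1: "l1 = map ((!) l) p1" and l2: "l2 = map ((!) l) p2"
    and mm: "m = mnew (fr p1 p2) NI"
    and s': "s' = (q1', q2', npt (fr p1 p2) m1 p1, npt (fr p1 p2) m2 p2, relupd rel l (fr p1 p2) NI)"
    and uu: "u = npt (fr p1 p2) m1 p1 ! u1"
    and eq: "relupd rel l (fr p1 p2) NI ! (npt (fr p1 p2) m1 p1 ! u1) ! (npt (fr p1 p2) m2 p2 ! u2) = CEq"
    by blast
  define f where "f = fr p1 p2"
  have L1: "length l1 = nregs S1" "length m1 = nregs S1" "u1 < nregs S1" "q1' \<in> states S1" using t_len[OF wf1 tr1] by auto
  have L2: "length l2 = nregs S2" "length m2 = nregs S2" "u2 < nregs S2" "q2' \<in> states S2" using t_len[OF wf2 tr2] by auto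
  have P: "length p1 = nregs S1" "length p2 = nregs S2" "set p1 \<subseteq> {..<NI}" "set p2 \<subseteq> {..<NI}"
    using I(1) by (simp_all add: PS_iff)
  have f: "f < NI" "f \<notin> set p1" "f \<notin> set p2" using fr_less[of p1 p2] fr_notin[of p1 p2] P unfolding f_def by auto
  have R': "R' = R[f:=d]" using U mm upd_mnew[of f R d] I(2) f unfolding f_def by simp
  have lR: "l = map (\<lambda>a. cmp_of d (R!a)) [0..<length R]" using guard_det[of R l d] G ll I(2) by simp
  have am1: "set m1 \<subseteq> {UOld,UNew}" using af_D[OF af1 tr1] .
  have am2: "set m2 \<subseteq> {UOld,UNew}" using af_D[OF af2 tr2] .
  define p1' where "p1' = npt f m1 p1"
  define p2' where "p2' = npt f m2 p2"
  have keep1: "\<forall>x\<in>set p1. R'!x = R!x"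
  proof
    fix x assume "x \<in> set p1" then have "x \<noteq> f" using f(2) by auto
    then show "R'!x = R!x" using R' by simp
  qed
  have keep2: "\<forall>x\<in>set p2. R'!x = R!x"
  proof
    fix x assume "x \<in> set p2" then have "x \<noteq> f" using f(3) by auto
    then show "R'!x = R!x" using R' by simp
  qed
  have Rf: "R'!f = d" using R' f(1) I(2) by simp
  have V1: "map ((!) R') p1' = map (\<lambda>i. upd_val (m1!i) (map ((!) R) p1 ! i) d) [0..<nregs S1]"
    unfolding p1'_def using npt_vals[OF Rf keep1] L1 P am1 by simp
  have V2: "map ((!) R') p2' = map (\<lambda>j. upd_val (m2!j) (map ((!) R) p2 ! j) d) [0..<nregs S2]"
    unfolding p2'_def using npt_vals[OF Rf keep2] L2 P am2 by simp
  have p1'set: "set p1' \<subseteq> {..<NI}" unfolding p1'_def using P f by (intro npt_set) auto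
  have p2'set: "set p2' \<subseteq> {..<NI}" unfolding p2'_def using P f by (intro npt_set) auto
  have rel': "relupd rel l f NI = relmat R'"
    using relupd_relmat[of f R d] I f(1) lR R' by simp
  have lenR': "length R' = NI" using R' I(2) by simp
  have a1: "p1'!u1 < NI" using p1'set L1 P unfolding p1'_def by (metis lessThan_iff npt_len nth_mem subsetD)
  have a2: "p2'!u2 < NI" using p2'set L2 P unfolding p2'_def by (metis lessThan_iff npt_len nth_mem subsetD)
  have "cmp_of (R'!(p1'!u1)) (R'!(p2'!u2)) = CEq"
    using eq rel' a1 a2 lenR' relmat_nth[of "p1'!u1" R' "p2'!u2"] unfolding p1'_def p2'_def f_def by simp
  then have weq: "R'!(p2'!u2) = w" using O uu unfolding p1'_def f_def by (simp add: cmp_of_eq_iff)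
  have step1: "srt_step S1 (q1, map ((!) R) p1) (\<sigma>,d) (\<gamma>,w) (q1', map ((!) R') p1')"
    unfolding srt_step_def fst_conv snd_conv
  proof (intro exI conjI)
    show "(q1, \<sigma>, l1, m1, u1, \<gamma>, q1') \<in> trans S1" by (rule tr1)
    show "\<forall>i<nregs S1. cmp_holds (l1 ! i) d (map ((!) R) p1 ! i)"
    proof (intro allI impI)
      fix i assume i: "i < nregs S1"
      then have "p1!i < NI" using P by (metis lessThan_iff nth_mem subsetD)
      then show "cmp_holds (l1 ! i) d (map ((!) R) p1 ! i)" using G i P l1 by simp
    qed
    show "map ((!) R') p1' = map (\<lambda>i. upd_val (m1!i) (map ((!) R) p1 ! i) d) [0..<nregs S1]" by (rule V1)
    show "w = map ((!) R') p1' ! u1" using L1 P O uu unfolding p1'_def f_def by simp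
  qed
  have step2: "srt_step S2 (q2, map ((!) R) p2) (\<sigma>,d) (\<gamma>,w) (q2', map ((!) R') p2')"
    unfolding srt_step_def fst_conv snd_conv
  proof (intro exI conjI)
    show "(q2, \<sigma>, l2, m2, u2, \<gamma>, q2') \<in> trans S2" by (rule tr2)
    show "\<forall>i<nregs S2. cmp_holds (l2 ! i) d (map ((!) R) p2 ! i)"
    proof (intro allI impI)
      fix i assume i: "i < nregs S2"
      then have "p2!i < NI" using P by (metis lessThan_iff nth_mem subsetD)
      then show "cmp_holds (l2 ! i) d (map ((!) R) p2 ! i)" using G i P l2 by simp
    qed
    show "map ((!) R') p2' = map (\<lambda>i. upd_val (m2!i) (map ((!) R) p2 ! i) d) [0..<nregs S2]" by (rule V2)
    show "w = map ((!) R') p2' ! u2" using L2 P weq unfolding p2'_def by simp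
  qed
  have PS': "(q1',q2',p1',p2',relupd rel l f NI) \<in> PS S1 S2"
    unfolding PS_iff using L1 L2 P p1'set p2'set relupd_shape[of rel l f NI]
    unfolding p1'_def p2'_def by simp
  show ?thesis
    apply (rule exI[of _ q1'], rule exI[of _ q2'], rule exI[of _ p1'], rule exI[of _ p2'], rule exI[of _ "relupd rel l f NI"])
    using step1 step2 PS' rel' lenR' s' unfolding p1'_def p2'_def f_def by simp
qed

lemma i_complete:
  assumes I: "(q1,q2,p1,p2,rel) \<in> PS S1 S2" "length R = NI" "rel = relmat R"
    and st1: "srt_step S1 (q1, map ((!) R) p1) (\<sigma>,d) (\<gamma>,w) c1"
    and st2: "srt_step S2 (q2, map ((!) R) p2) (\<sigma>,d) (\<gamma>,w) c2"
  shows "\<exists>p1' p2' rel' R'. gstep (interT S1 S2) NI ((q1,q2,p1,p2,rel),R) (\<sigma>,d) (\<gamma>,w) ((fst c1, fst c2, p1', p2', rel'), R') \<and>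
     (fst c1, fst c2, p1', p2', rel') \<in> PS S1 S2 \<and> length R' = NI \<and> rel' = relmat R' \<and>
     snd c1 = map ((!) R') p1' \<and> snd c2 = map ((!) R') p2'"
proof -
  from st1 obtain l1 m1 u1 where tr1: "(q1,\<sigma>,l1,m1,u1,\<gamma>,fst c1) \<in> trans S1"
    and G1: "\<forall>i<nregs S1. cmp_holds (l1!i) d (map ((!) R) p1 ! i)"
    and U1: "snd c1 = map (\<lambda>i. upd_val (m1!i) (map ((!) R) p1 ! i) d) [0..<nregs S1]"
    and O1: "w = snd c1 ! u1"
    unfolding srt_step_def fst_conv snd_conv by blast
  from st2 obtain l2 m2 u2 where tr2: "(q2,\<sigma>,l2,m2,u2,\<gamma>,fst c2) \<in> trans S2"
    and G2: "\<forall>j<nregs S2. cmp_holds (l2!j) d (map ((!) R) p2 ! j)"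
    and U2: "snd c2 = map (\<lambda>j. upd_val (m2!j) (map ((!) R) p2 ! j) d) [0..<nregs S2]"
    and O2: "w = snd c2 ! u2"
    unfolding srt_step_def fst_conv snd_conv by blast
  have L1: "length l1 = nregs S1" "length m1 = nregs S1" "u1 < nregs S1" "fst c1 \<in> states S1" using t_len[OF wf1 tr1] by auto
  have L2: "length l2 = nregs S2" "length m2 = nregs S2" "u2 < nregs S2" "fst c2 \<in> states S2" using t_len[OF wf2 tr2] by auto
  have P: "length p1 = nregs S1" "length p2 = nregs S2" "set p1 \<subseteq> {..<NI}" "set p2 \<subseteq> {..<NI}"
    using I(1) by (simp_all add: PS_iff)
  define f where "f = fr p1 p2"
  have f: "f < NI" "f \<notin> set p1" "f \<notin> set p2" using fr_less[of p1 p2] fr_notin[of p1 p2] P unfolding f_def by auto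
  define l where "l = map (\<lambda>a. cmp_of d (R!a)) [0..<NI]"
  define R' where "R' = R[f:=d]"
  define p1' where "p1' = npt f m1 p1"
  define p2' where "p2' = npt f m2 p2"
  have am1: "set m1 \<subseteq> {UOld,UNew}" using af_D[OF af1 tr1] .
  have am2: "set m2 \<subseteq> {UOld,UNew}" using af_D[OF af2 tr2] .
  have keep1: "\<forall>x\<in>set p1. R'!x = R!x"
  proof
    fix x assume "x \<in> set p1" then have "x \<noteq> f" using f(2) by auto
    then show "R'!x = R!x" unfolding R'_def by simp
  qed
  have keep2: "\<forall>x\<in>set p2. R'!x = R!x"
  proof
    fix x assume "x \<in> set p2" then have "x \<noteq> f" using f(3) by auto
    then show "R'!x = R!x" unfolding R'_def by simp
  qed
  have Rf: "R'!f = d" using f(1) I(2) unfolding R'_def by simp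
  have V1: "map ((!) R') p1' = snd c1"
    unfolding p1'_def U1 using npt_vals[OF Rf keep1] L1 P am1 by simp
  have V2: "map ((!) R') p2' = snd c2"
    unfolding p2'_def U2 using npt_vals[OF Rf keep2] L2 P am2 by simp
  have w1: "R'!(p1'!u1) = w"
  proof -
    have "R'!(p1'!u1) = map ((!) R') p1' ! u1" using L1 P unfolding p1'_def by simp
    then show ?thesis using V1 O1 by simp
  qed
  have w2: "R'!(p2'!u2) = w"
  proof -
    have "R'!(p2'!u2) = map ((!) R') p2' ! u2" using L2 P unfolding p2'_def by simp
    then show ?thesis using V2 O2 by simp
  qed
  have l1e: "l1 = map ((!) l) p1"
  proof (rule nth_equalityI)
    show "length l1 = length (map ((!) l) p1)" using L1 P by simp
    fix i assume "i < length l1"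
    then have i: "i < nregs S1" using L1 by simp
    then have b: "p1!i < NI" using P by (metis lessThan_iff nth_mem subsetD)
    have "l1!i = cmp_of d (R!(p1!i))" using G1 i P by (simp add: cmp_holds_iff)
    then show "l1!i = map ((!) l) p1 ! i" using b i P unfolding l_def by simp
  qed
  have l2e: "l2 = map ((!) l) p2"
  proof (rule nth_equalityI)
    show "length l2 = length (map ((!) l) p2)" using L2 P by simp
    fix i assume "i < length l2"
    then have i: "i < nregs S2" using L2 by simp
    then have b: "p2!i < NI" using P by (metis lessThan_iff nth_mem subsetD)
    have "l2!i = cmp_of d (R!(p2!i))" using G2 i P by (simp add: cmp_holds_iff)
    then show "l2!i = map ((!) l) p2 ! i" using b i P unfolding l_def by simp
  qed
  have p1'set: "set p1' \<subseteq> {..<NI}" unfolding p1'_def using P f by (intro npt_set) auto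
  have p2'set: "set p2' \<subseteq> {..<NI}" unfolding p2'_def using P f by (intro npt_set) auto
  have a1: "p1'!u1 < NI" using p1'set L1 P unfolding p1'_def by (metis lessThan_iff npt_len nth_mem subsetD)
  have a2: "p2'!u2 < NI" using p2'set L2 P unfolding p2'_def by (metis lessThan_iff npt_len nth_mem subsetD)
  have PS': "(fst c1, fst c2, p1', p2', relupd rel l f NI) \<in> PS S1 S2"
    unfolding PS_iff using L1 L2 P p1'set p2'set relupd_shape[of rel l f NI]
    unfolding p1'_def p2'_def by simp
  have rel': "relupd rel l f NI = relmat R'"
    using relupd_relmat[of f R d] I f(1) unfolding l_def R'_def by simp
  have lenR': "length R' = NI" using I(2) unfolding R'_def by simp
  have eq: "relupd rel l f NI ! (p1'!u1) ! (p2'!u2) = CEq"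
    using rel' a1 a2 lenR' relmat_nth[of "p1'!u1" R' "p2'!u2"] w1 w2 by simp
  have cp: "iP S1 S2 (q1,q2,p1,p2,rel) \<sigma> l (mnew f NI) (p1'!u1) \<gamma> (fst c1, fst c2, p1', p2', relupd rel l f NI)"
    unfolding iP_iff
    apply (rule conjI[OF I(1)])
    apply (rule exI[of _ l1], rule exI[of _ m1], rule exI[of _ u1], rule exI[of _ "fst c1"],
           rule exI[of _ l2], rule exI[of _ m2], rule exI[of _ u2], rule exI[of _ "fst c2"])
    using tr1 tr2 l1e l2e eq unfolding p1'_def p2'_def f_def l_def by simp
  have gs: "gstep (interT S1 S2) NI ((q1,q2,p1,p2,rel),R) (\<sigma>,d) (\<gamma>,w) ((fst c1, fst c2, p1', p2', relupd rel l f NI), R')"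
    unfolding gstep_def fst_conv snd_conv
  proof (intro exI conjI)
    show "((q1,q2,p1,p2,rel), \<sigma>, l, mnew f NI, p1'!u1, \<gamma>, (fst c1, fst c2, p1', p2', relupd rel l f NI)) \<in> interT S1 S2"
      unfolding interT_iff by (rule cp)
    show "\<forall>i<NI. cmp_holds (l ! i) d (R ! i)" unfolding l_def by (simp add: cmp_holds_of)
    show "R' = map (\<lambda>i. upd_val (mnew f NI ! i) (R ! i) d) [0..<NI]"
      using upd_mnew[of f R d] f(1) I(2) unfolding R'_def by simp
    show "w = R' ! (p1'!u1)" using w1 by simp
  qed
  show ?thesis
    apply (rule exI[of _ p1'], rule exI[of _ p2'], rule exI[of _ "relupd rel l f NI"], rule exI[of _ R'])
    using gs PS' rel' lenR' V1 V2 by simp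
qed

lemma i_run:
  assumes "(q1,q2,p1,p2,rel) \<in> PS S1 S2" "length R = NI" "rel = relmat R"
  shows "grun (interT S1 S2) NI ((q1,q2,p1,p2,rel),R) xs ys \<longleftrightarrow>
    srt_run S1 (q1, map ((!) R) p1) xs ys \<and> srt_run S2 (q2, map ((!) R) p2) xs ys"
  using assms
proof (induction xs arbitrary: q1 q2 p1 p2 rel R ys)
  case Nil
  then show ?case by (simp add: grun_Nil srt_run_Nil)
next
  case (Cons x xs)
  obtain \<sigma> d where x: "x = (\<sigma>,d)" by (cases x)
  show ?case
  proof
    assume H: "grun (interT S1 S2) NI ((q1,q2,p1,p2,rel),R) (x#xs) ys"
    then obtain y ys' where ys: "ys = y#ys'" by (cases ys) auto
    obtain \<gamma> w where y: "y = (\<gamma>,w)" by (cases y)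
    from H obtain c' where st: "gstep (interT S1 S2) NI ((q1,q2,p1,p2,rel),R) (\<sigma>,d) (\<gamma>,w) c'"
      and run: "grun (interT S1 S2) NI c' xs ys'" using ys y x by auto
    obtain s' R' where c': "c' = (s',R')" by (cases c')
    from i_sound[OF Cons.prems st[unfolded c']] obtain q1' q2' p1' p2' rel' where
      s': "s' = (q1',q2',p1',p2',rel')"
      and st1: "srt_step S1 (q1, map ((!) R) p1) (\<sigma>,d) (\<gamma>,w) (q1', map ((!) R') p1')"
      and st2: "srt_step S2 (q2, map ((!) R) p2) (\<sigma>,d) (\<gamma>,w) (q2', map ((!) R') p2')"
      and inv: "(q1',q2',p1',p2',rel') \<in> PS S1 S2" "length R' = NI" "rel' = relmat R'" by blast
    from Cons.IH[OF inv] run c' s' have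
      r1: "srt_run S1 (q1', map ((!) R') p1') xs ys'" and r2: "srt_run S2 (q2', map ((!) R') p2') xs ys'" by auto
    show "srt_run S1 (q1, map ((!) R) p1) (x#xs) ys \<and> srt_run S2 (q2, map ((!) R) p2) (x#xs) ys"
      using st1 r1 st2 r2 x ys y by auto
  next
    assume "srt_run S1 (q1, map ((!) R) p1) (x#xs) ys \<and> srt_run S2 (q2, map ((!) R) p2) (x#xs) ys"
    then have r1: "srt_run S1 (q1, map ((!) R) p1) (x#xs) ys" and r2: "srt_run S2 (q2, map ((!) R) p2) (x#xs) ys" by auto
    then obtain y ys' where ys: "ys = y#ys'" by (cases ys) auto
    obtain \<gamma> w where y: "y = (\<gamma>,w)" by (cases y)
    from r1 ys y x obtain c1 where st1: "srt_step S1 (q1, map ((!) R) p1) (\<sigma>,d) (\<gamma>,w) c1" and r1': "srt_run S1 c1 xs ys'" by auto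
    from r2 ys y x obtain c2 where st2: "srt_step S2 (q2, map ((!) R) p2) (\<sigma>,d) (\<gamma>,w) c2" and r2': "srt_run S2 c2 xs ys'" by auto
    from i_complete[OF Cons.prems st1 st2] obtain p1' p2' rel' R' where
      gs: "gstep (interT S1 S2) NI ((q1,q2,p1,p2,rel),R) (\<sigma>,d) (\<gamma>,w) ((fst c1, fst c2, p1', p2', rel'), R')"
      and inv: "(fst c1, fst c2, p1', p2', rel') \<in> PS S1 S2" "length R' = NI" "rel' = relmat R'"
      and e1: "snd c1 = map ((!) R') p1'" and e2: "snd c2 = map ((!) R') p2'" by blast
    have "srt_run S1 (fst c1, map ((!) R') p1') xs ys'" using r1' e1 by (metis prod.collapse)
    moreover have "srt_run S2 (fst c2, map ((!) R') p2') xs ys'" using r2' e2 by (metis prod.collapse)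
    ultimately have gr: "grun (interT S1 S2) NI ((fst c1, fst c2, p1', p2', rel'), R') xs ys'"
      using Cons.IH[OF inv] by blast
    have "grun (interT S1 S2) NI ((q1,q2,p1,p2,rel),R) ((\<sigma>,d)#xs) ((\<gamma>,w)#ys')"
      using gs gr by (simp only: grun.simps) blast
    then show "grun (interT S1 S2) NI ((q1,q2,p1,p2,rel),R) (x#xs) ys" using x ys y by simp
  qed
qed

lemma inter_sem_eq: "srt_sem (interM S1 S2) = srt_sem S1 \<inter> srt_sem S2"
proof -
  have l: "length (rinit S1 @ rinit S2 @ [0]) = NI" using wf1 wf2 by (simp add: wf_srt_def)
  obtain a b c e g where s: "s0 S1 S2 (rinit S1 @ rinit S2 @ [0]) = (a,b,c,e,g)" by (cases "s0 S1 S2 (rinit S1 @ rinit S2 @ [0])")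
  have abc: "a = init S1" "b = init S2" "c = [0..<nregs S1]" "e = [nregs S1..<nregs S1 + nregs S2]" "g = relmat (rinit S1 @ rinit S2 @ [0])"
    using s unfolding s0_def by auto
  have ci: "s0 S1 S2 (rinit S1 @ rinit S2 @ [0]) \<in> PS S1 S2"
    "map ((!) (rinit S1 @ rinit S2 @ [0])) [0..<nregs S1] = rinit S1"
    "map ((!) (rinit S1 @ rinit S2 @ [0])) [nregs S1..<nregs S1 + nregs S2] = rinit S2"
    using c_init[OF wf1 wf2] by auto
  have r: "grun (interT S1 S2) NI (s0 S1 S2 (rinit S1 @ rinit S2 @ [0]), rinit S1 @ rinit S2 @ [0]) xs ys \<longleftrightarrow>
      srt_run S1 (init S1, rinit S1) xs ys \<and> srt_run S2 (init S2, rinit S2) xs ys" for xs ys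
    using i_run[of a b c e g "rinit S1 @ rinit S2 @ [0]" xs ys] ci s abc l by simp
  show ?thesis unfolding interM_def mk_sem set_eq_iff mem_Collect_eq inter_sem r by simp
qed

lemma i_trans_ok:
  assumes "iP S1 S2 s \<sigma> l m u \<gamma> s'"
  shows "s \<in> PS S1 S2 \<and> s' \<in> PS S1 S2 \<and> length l = NI \<and> length m = NI \<and> u < NI \<and> set m \<subseteq> {UOld, UNew}"
proof -
  obtain q1 q2 p1 p2 rel where s: "s = (q1,q2,p1,p2,rel)" by (cases s)
  from assms[unfolded s iP_iff] obtain l1 m1 u1 q1' l2 m2 u2 q2' where
    I: "(q1,q2,p1,p2,rel) \<in> PS S1 S2" and
    tr1: "(q1,\<sigma>,l1,m1,u1,\<gamma>,q1') \<in> trans S1" and tr2: "(q2,\<sigma>,l2,m2,u2,\<gamma>,q2') \<in> trans S2"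
    and ll: "length l = NI"
    and mm: "m = mnew (fr p1 p2) NI"
    and s': "s' = (q1', q2', npt (fr p1 p2) m1 p1, npt (fr p1 p2) m2 p2, relupd rel l (fr p1 p2) NI)"
    and uu: "u = npt (fr p1 p2) m1 p1 ! u1"
    by blast
  define f where "f = fr p1 p2"
  have L1: "length l1 = nregs S1" "length m1 = nregs S1" "u1 < nregs S1" "q1' \<in> states S1" using t_len[OF wf1 tr1] by auto
  have L2: "length l2 = nregs S2" "length m2 = nregs S2" "u2 < nregs S2" "q2' \<in> states S2" using t_len[OF wf2 tr2] by auto
  have P: "length p1 = nregs S1" "length p2 = nregs S2" "set p1 \<subseteq> {..<NI}" "set p2 \<subseteq> {..<NI}"
    using I by (simp_all add: PS_iff)
  have f: "f < NI" using fr_less[of p1 p2] P unfolding f_def by auto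
  define p1' where "p1' = npt f m1 p1"
  define p2' where "p2' = npt f m2 p2"
  have p1'set: "set p1' \<subseteq> {..<NI}" unfolding p1'_def using P f by (intro npt_set) auto
  have p2'set: "set p2' \<subseteq> {..<NI}" unfolding p2'_def using P f by (intro npt_set) auto
  have PS': "s' \<in> PS S1 S2"
    unfolding s' PS_iff using L1 L2 P p1'set p2'set relupd_shape[of rel l f NI]
    unfolding p1'_def p2'_def f_def by simp
  have "u \<in> set p1'" using uu L1 P unfolding p1'_def f_def by (metis npt_len nth_mem)
  then have "u < NI" using p1'set by auto
  moreover have "length m = NI" "set m \<subseteq> {UOld, UNew}" using mm by (auto simp: mnew_def)
  ultimately show ?thesis using I s PS' ll by simp
qed

lemma inter_wf: "wf_srt (interM S1 S2)"
  unfolding interM_def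
proof (rule mk_wf)
  show "finite (PS S1 S2)" using wf1 wf2 by (intro PS_finite) (simp_all add: wf_srt_def)
  show "s0 S1 S2 (rinit S1 @ rinit S2 @ [0]) \<in> PS S1 S2" using c_init[OF wf1 wf2] by blast
  show "length (rinit S1 @ rinit S2 @ [0]) = NI" using wf1 wf2 by (simp add: wf_srt_def)
  fix q \<sigma> l m u \<gamma> q' assume "(q, \<sigma>, l, m, u, \<gamma>, q') \<in> interT S1 S2"
  then show "q \<in> PS S1 S2 \<and> q' \<in> PS S1 S2 \<and> length l = NI \<and> length m = NI \<and> u < NI"
    using i_trans_ok unfolding interT_iff by blast
qed

lemma inter_af: "add_free (interM S1 S2)"
  unfolding interM_def
  by (rule mk_af) (use i_trans_ok in \<open>auto simp: interT_iff\<close>)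

end

theorem theorem3p20:
  assumes "infinite (UNIV :: 'd::{linorder, group_add} set)"
  shows "((\<forall>a b :: 'd. a < b \<longrightarrow> (\<exists>c. a < c \<and> c < b)) \<longrightarrow>
           (\<forall>S1 S2 :: ('a::finite,'b::finite,'d) srt. srt_AD S1 \<and> srt_AD S2 \<longrightarrow>
              (\<exists>S :: ('a,'b,'d) srt. srt_AD S \<and> srt_sem S = srt_sem S1 \<union> srt_sem S2) \<and>
              (\<exists>S :: ('a,'b,'d) srt. srt_AD S \<and> srt_sem S = srt_sem S1 \<inter> srt_sem S2)) \<and>
           (\<forall>(S1 :: ('a,'b,'d) srt) (S2 :: ('b,'c::finite,'d) srt). srt_AD S1 \<and> srt_AD S2 \<longrightarrow>
              (\<exists>S :: ('a,'c,'d) srt. srt_AD S \<and> srt_sem S = rel_comp (srt_sem S1) (srt_sem S2))))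
       \<and> ((\<forall>S1 S2 :: ('a,'b,'d) srt. srt_AU S1 \<and> srt_AU S2 \<longrightarrow>
              (\<exists>S :: ('a,'b,'d) srt. srt_AU S \<and> srt_sem S = srt_sem S1 \<union> srt_sem S2) \<and>
              (\<exists>S :: ('a,'b,'d) srt. srt_AU S \<and> srt_sem S = srt_sem S1 \<inter> srt_sem S2)) \<and>
           (\<forall>(S1 :: ('a,'b,'d) srt) (S2 :: ('b,'c,'d) srt). srt_AU S1 \<and> srt_AU S2 \<longrightarrow>
              (\<exists>S :: ('a,'c,'d) srt. srt_AU S \<and> srt_sem S = rel_comp (srt_sem S1) (srt_sem S2))))"
proof -
  have unAD: "srt_AD (unionM S1 S2) \<and> srt_sem (unionM S1 S2) = srt_sem S1 \<union> srt_sem S2"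
    if "srt_AD S1" "srt_AD S2" for S1 S2 :: "('a,'b,'d) srt"
  proof -
    have h: "wf_srt S1" "add_free S1" "wf_srt S2" "add_free S2" using that unfolding srt_AD_def by auto
    show ?thesis unfolding srt_AD_def using h by (simp add: union_wf union_af union_sem)
  qed
  have inAD: "srt_AD (interM S1 S2) \<and> srt_sem (interM S1 S2) = srt_sem S1 \<inter> srt_sem S2"
    if "srt_AD S1" "srt_AD S2" for S1 S2 :: "('a,'b,'d) srt"
  proof -
    have h: "wf_srt S1" "add_free S1" "wf_srt S2" "add_free S2" using that unfolding srt_AD_def by auto
    show ?thesis unfolding srt_AD_def using h by (simp add: inter_wf inter_af inter_sem_eq)
  qed
  have coAD: "srt_AD (compM S1 S2) \<and> srt_sem (compM S1 S2) = rel_comp (srt_sem S1) (srt_sem S2)"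
    if "srt_AD S1" "srt_AD S2" for S1 :: "('a,'b,'d) srt" and S2 :: "('b,'c,'d) srt"
  proof -
    have h: "wf_srt S1" "add_free S1" "wf_srt S2" "add_free S2" using that unfolding srt_AD_def by auto
    show ?thesis unfolding srt_AD_def using h by (simp add: comp_wf comp_af comp_sem)
  qed
  have unAU: "srt_AU (unionM S1 S2) \<and> srt_sem (unionM S1 S2) = srt_sem S1 \<union> srt_sem S2"
    if "srt_AU S1" "srt_AU S2" for S1 S2 :: "('a,'b,'d) srt"
  proof -
    have h: "wf_srt S1" "add_free S1" "wf_srt S2" "add_free S2" using that unfolding srt_AU_def by auto
    have r: "rinit (unionM S1 S2) = replicate (nregs (unionM S1 S2)) 0"
      using that unfolding srt_AU_def by (simp add: unionM_def replicate_add)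
    show ?thesis unfolding srt_AU_def using h r by (simp add: union_wf union_af union_sem)
  qed
  have inAU: "srt_AU (interM S1 S2) \<and> srt_sem (interM S1 S2) = srt_sem S1 \<inter> srt_sem S2"
    if "srt_AU S1" "srt_AU S2" for S1 S2 :: "('a,'b,'d) srt"
  proof -
    have h: "wf_srt S1" "add_free S1" "wf_srt S2" "add_free S2" using that unfolding srt_AU_def by auto
    have r: "rinit (interM S1 S2) = replicate (nregs (interM S1 S2)) 0"
      using that unfolding srt_AU_def by (simp add: interM_def replicate_add replicate_append_same)
    show ?thesis unfolding srt_AU_def using h r by (simp add: inter_wf inter_af inter_sem_eq)
  qed
  have coAU: "srt_AU (compM S1 S2) \<and> srt_sem (compM S1 S2) = rel_comp (srt_sem S1) (srt_sem S2)"
    if "srt_AU S1" "srt_AU S2" for S1 :: "('a,'b,'d) srt" and S2 :: "('b,'c,'d) srt"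
  proof -
    have h: "wf_srt S1" "add_free S1" "wf_srt S2" "add_free S2" using that unfolding srt_AU_def by auto
    have r: "rinit (compM S1 S2) = replicate (nregs (compM S1 S2)) 0"
      using that unfolding srt_AU_def by (simp add: compM_def replicate_add replicate_append_same)
    show ?thesis unfolding srt_AU_def using h r by (simp add: comp_wf comp_af comp_sem)
  qed
  show ?thesis
    apply (intro conjI impI allI)
    subgoal for S1 S2 using unAD[of S1 S2] by blast
    subgoal for S1 S2 using inAD[of S1 S2] by blast
    subgoal for S1 S2 using coAD[of S1 S2] by blast
    subgoal for S1 S2 using unAU[of S1 S2] by blast
    subgoal for S1 S2 using inAU[of S1 S2] by blast
    subgoal for S1 S2 using coAU[of S1 S2] by blast
    done
qed

end
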